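(* Let $X$ be a compact Hausdorff space, $N\ge1$, and $\phi_1,\dots,\phi_m$ real-valued continuous functions on $X$. For $d\ge1$ let $\mathcal C(X,d,\boldsymbol\phi)$ be the set of $d\times d$ matrix-valued Borel measures $\mu$ on $X$ with $\mu(\Delta)\ge0$ for all Borel $\Delta$, $\mu(X)=I_d$, and $\int_X\phi_r\,d\mu=0$ for $r=1,\dots,m$. Suppose $\mu=\sum_{k=1}^n\mu_kL_k$, where (i) each $\mu_k$ is a positive scalar measure which is an extreme point of $\mathcal C(X,1,\boldsymbol\phi)$, and the supports $\operatorname{supp}\mu_k$, $k=1,\dots,n$, are pairwise disjoint; (ii) the $N\times N$ matrices $L_k$ satisfy $L_k\ge0$ for each $k$ and $\sum_{k=1}^nL_k=I_N$; (iii) the family of subspaces $\{\operatorname{Ran}L_k : k=1,\dots,n\}$ of $\mathbb C^N$ is weakly independent. Then $\mu$ is an extreme point of $\mathcal C(X,N,\boldsymbol\phi)$.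
   Context: An operator $T$ on $\mathbb C^N$ lives on a subspace $\mathcal M$ if $T=TP_{\mathcal M}=P_{\mathcal M}T$, with $P_{\mathcal M}$ the orthogonal projection onto $\mathcal M$. A family of subspaces $\{\mathcal M_1,\dots,\mathcal M_n\}$ of $\mathbb C^N$ is weakly independent if whenever $T_1,\dots,T_n$ are linear operators on $\mathbb C^N$ with $T_j$ living on $\mathcal M_j$ for each $j$ and $\sum_{j=1}^nT_j=0$, it follows that $T_j=0$ for all $j$. *)

theory Defs
  imports "HOL-Analysis.Analysis"
begin

(* d x d complex matrices are  complex^'d^'d  (dimension d = CARD('d)). *)

definition adj :: "complex^'n^'m \<Rightarrow> complex^'m^'n" where
  "adj A = (\<chi> i j. cnj (A $ j $ i))"

definition cscale :: "complex \<Rightarrow> complex^'n^'m \<Rightarrow> complex^'n^'m" where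
  "cscale c A = (\<chi> i j. c * A $ i $ j)"

definition qf :: "complex^'d^'d \<Rightarrow> complex^'d \<Rightarrow> complex" where
  "qf A v = (\<Sum>i\<in>UNIV. cnj (v $ i) * (A *v v) $ i)"

definition psd :: "complex^'d^'d \<Rightarrow> bool" where
  "psd A \<longleftrightarrow> (\<forall>v. Im (qf A v) = 0 \<and> Re (qf A v) \<ge> 0)"

(* matrix-valued Borel measure on X = UNIV :: 'a set: countably additive (entrywise)
   on the Borel sets; by convention it is 0 on non-Borel sets. *)
definition mat_measure :: "('a::topological_space set \<Rightarrow> complex^'d^'d) \<Rightarrow> bool" where
  "mat_measure \<mu> \<longleftrightarrow>
     (\<forall>\<Delta>. \<Delta> \<notin> sets borel \<longrightarrow> \<mu> \<Delta> = 0) \<and>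
     (\<forall>A. range A \<subseteq> sets borel \<longrightarrow> disjoint_family A \<longrightarrow>
        (\<forall>i j. (\<lambda>k. \<mu> (A k) $ i $ j) sums (\<mu> (\<Union>k. A k) $ i $ j)))"

definition qmeas :: "('a::topological_space set \<Rightarrow> complex^'d^'d) \<Rightarrow> complex^'d \<Rightarrow> 'a measure" where
  "qmeas \<mu> v = measure_of UNIV (sets borel) (\<lambda>\<Delta>. ennreal (Re (qf (\<mu> \<Delta>) v)))"

(* the matrix  \<integral> f d\<mu>, entry (i,j) = \<integral> f d\<mu>_ij, obtained by polarization:
   e_i* M e_j = 1/4 \<Sum>_{k<4} i^k (e_j + i^k e_i)* M (e_j + i^k e_i) *)
definition mat_integral :: "('a::topological_space set \<Rightarrow> complex^'d^'d) \<Rightarrow> ('a \<Rightarrow> real) \<Rightarrow> complex^'d^'d" where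
  "mat_integral \<mu> f = (\<chi> i j. (1/4) * (\<Sum>k<(4::nat). \<i> ^ k *
       complex_of_real (integral\<^sup>L (qmeas \<mu> (axis j 1 + (\<i> ^ k) *s axis i 1)) f)))"

(* C(X,d,phi) with phi = (phi_0,...,phi_{m-1}) *)
definition Cset :: "nat \<Rightarrow> (nat \<Rightarrow> 'a::topological_space \<Rightarrow> real) \<Rightarrow> ('a set \<Rightarrow> complex^'d^'d) set" where
  "Cset m \<phi> = {\<mu>. mat_measure \<mu> \<and> (\<forall>\<Delta>\<in>sets borel. psd (\<mu> \<Delta>)) \<and> \<mu> UNIV = mat 1 \<and>
                    (\<forall>r<m. mat_integral \<mu> (\<phi> r) = 0)}"

definition extreme_pt :: "('b \<Rightarrow> complex^'d^'d) set \<Rightarrow> ('b \<Rightarrow> complex^'d^'d) \<Rightarrow> bool" where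
  "extreme_pt C \<mu> \<longleftrightarrow> \<mu> \<in> C \<and>
     (\<forall>\<nu>1\<in>C. \<forall>\<nu>2\<in>C. \<forall>t::real. 0 < t \<and> t < 1 \<and>
        \<mu> = (\<lambda>\<Delta>. t *\<^sub>R \<nu>1 \<Delta> + (1 - t) *\<^sub>R \<nu>2 \<Delta>) \<longrightarrow> \<nu>1 = \<mu> \<and> \<nu>2 = \<mu>)"

definition supp :: "('a::topological_space set \<Rightarrow> complex^'d^'d) \<Rightarrow> 'a set" where
  "supp \<mu> = {x. \<forall>U. open U \<and> x \<in> U \<longrightarrow> \<mu> U \<noteq> 0}"

definition mat_range :: "complex^'n^'n \<Rightarrow> (complex^'n) set" where
  "mat_range A = range (\<lambda>v. A *v v)"

definition orth_proj :: "complex^'n^'n \<Rightarrow> (complex^'n) set \<Rightarrow> bool" where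
  "orth_proj P M \<longleftrightarrow> P ** P = P \<and> adj P = P \<and> mat_range P = M"

definition lives_on :: "complex^'n^'n \<Rightarrow> (complex^'n) set \<Rightarrow> bool" where
  "lives_on T M \<longleftrightarrow> (\<exists>P. orth_proj P M \<and> T = T ** P \<and> T = P ** T)"

definition weakly_independent :: "nat \<Rightarrow> (nat \<Rightarrow> (complex^'n) set) \<Rightarrow> bool" where
  "weakly_independent n M \<longleftrightarrow>
     (\<forall>T::nat \<Rightarrow> complex^'n^'n. (\<forall>j<n. lives_on (T j) (M j)) \<and> (\<Sum>j<n. T j) = 0
        \<longrightarrow> (\<forall>j<n. T j = 0))"

end

theory Submission
  imports Defs
begin

definition cinner :: "complex^'n \<Rightarrow> complex^'n \<Rightarrow> complex" where
  "cinner x y = (\<Sum>i\<in>UNIV. cnj (x$i) * y$i)"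

lemma qf_cinner: "qf A v = cinner v (A *v v)"
  by (simp add: qf_def cinner_def)

lemma cinner_add_left: "cinner (x + y) z = cinner x z + cinner y z"
  by (simp add: cinner_def distrib_right sum.distrib)
lemma cinner_add_right: "cinner z (x + y) = cinner z x + cinner z y"
  by (simp add: cinner_def distrib_left sum.distrib)
lemma cinner_diff_left: "cinner (x - y) z = cinner x z - cinner y z"
  by (simp add: cinner_def left_diff_distrib sum_subtractf)
lemma cinner_diff_right: "cinner z (x - y) = cinner z x - cinner z y"
  by (simp add: cinner_def right_diff_distrib sum_subtractf)
lemma cinner_scale_left: "cinner (c *s x) z = cnj c * cinner x z"
  by (simp add: cinner_def sum_distrib_left mult.assoc)
lemma cinner_scale_right: "cinner z (c *s x) = c * cinner z x"
  by (simp add: cinner_def sum_distrib_left mult.left_commute)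
lemma cinner_zero_left[simp]: "cinner 0 z = 0" by (simp add: cinner_def)
lemma cinner_zero_right[simp]: "cinner z 0 = 0" by (simp add: cinner_def)
lemma cinner_commute: "cinner y x = cnj (cinner x y)"
  by (simp add: cinner_def mult.commute)
lemma cinner_axis_left: "cinner (axis i 1) y = y $ i"
proof -
  have "cinner (axis i 1) y = (\<Sum>k\<in>UNIV. if k = i then y $ k else 0)"
    unfolding cinner_def by (rule sum.cong) (auto simp: axis_def)
  thus ?thesis by simp
qed
lemma cinner_axis_right: "cinner y (axis i 1) = cnj (y $ i)"
  by (simp add: cinner_commute[of y] cinner_axis_left)

lemma cinner_self_Re: "Re (cinner x x) = (\<Sum>i\<in>UNIV. (cmod (x$i))^2)"
  unfolding cinner_def Re_sum by (rule sum.cong) (auto simp: cmod_power2, simp add: power2_eq_square)  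

lemma cinner_self_eq0: "Re (cinner x x) = 0 \<Longrightarrow> x = 0"
proof -
  assume "Re (cinner x x) = 0"
  hence "(\<Sum>i\<in>UNIV. (cmod (x$i))^2) = 0" by (simp add: cinner_self_Re)
  hence "\<forall>i\<in>UNIV. (cmod (x$i))^2 = 0" by (subst (asm) sum_nonneg_eq_0_iff) auto
  thus "x = 0" by (simp add: vec_eq_iff)
qed

lemma inner_cinner: "x \<bullet> y = Re (cinner x y)"
  by (simp add: inner_vec_def cinner_def Re_sum inner_complex_def)

lemma mv_add: "A *v (x + y) = A *v x + A *v (y::complex^'n)"
  by (simp add: matrix_vector_right_distrib)
lemma mv_diff: "A *v (x - y) = A *v x - A *v (y::complex^'n)"
  by (simp add: vec_eq_iff matrix_vector_mult_def right_diff_distrib sum_subtractf)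
lemma mv_scale: "A *v (c *s x) = c *s (A *v (x::complex^'n))"
  by (simp add: vec_eq_iff matrix_vector_mult_def sum_distrib_left mult.left_commute)
lemma mv_axis: "(A *v axis j 1) $ i = A $ i $ (j::'n::finite)"
proof -
  have "(A *v axis j 1) $ i = (\<Sum>k\<in>UNIV. if k = j then A $ i $ k else 0)"
    unfolding matrix_vector_mult_def vec_lambda_beta by (rule sum.cong) (auto simp: axis_def)
  thus ?thesis by simp
qed

lemma cinner_adj: "cinner x (A *v y) = cinner (adj A *v x) y"
proof -
  have "cinner x (A *v y) = (\<Sum>i\<in>UNIV. \<Sum>j\<in>UNIV. cnj (x$i) * A$i$j * y$j)"
    by (simp add: cinner_def matrix_vector_mult_def sum_distrib_left mult.assoc)
  also have "\<dots> = (\<Sum>j\<in>UNIV. \<Sum>i\<in>UNIV. cnj (x$i) * A$i$j * y$j)"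
    by (rule sum.swap)
  also have "\<dots> = cinner (adj A *v x) y"
    by (simp add: cinner_def matrix_vector_mult_def adj_def sum_distrib_right sum_distrib_left cnj_sum ac_simps)
  finally show ?thesis .
qed

lemma matrix_eq_mv: "(\<And>x. A *v x = B *v (x::complex^'n)) \<Longrightarrow> A = (B::complex^'n^'m)"
  by (metis mv_axis vec_eq_iff)

lemma vec_eq_cinner: "(\<And>y. cinner x y = cinner x' (y::complex^'n)) \<Longrightarrow> x = x'"
  by (metis cinner_axis_right complex_cnj_cnj vec_eq_iff)

lemma qf_add_scale:
  "qf A (x + c *s y) = qf A x + c * cinner x (A *v y) + cnj c * cinner y (A *v x) + cnj c * c * qf A y"
  by (simp add: qf_cinner mv_add mv_scale cinner_add_left cinner_add_right cinner_scale_left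
      cinner_scale_right algebra_simps)

lemma polarization:
  "A $ i $ j = (1/4) * (\<Sum>k<(4::nat). \<i> ^ k * qf A (axis j 1 + (\<i> ^ k) *s axis i 1))"
proof -
  have e: "qf A (axis j 1 + c *s axis i 1) = A$j$j + c * A$j$i + cnj c * A$i$j + cnj c * c * A$i$i" for c
    unfolding qf_add_scale by (simp add: qf_cinner cinner_axis_left mv_axis)
  show ?thesis
    by (simp add: e numeral_eq_Suc lessThan_Suc algebra_simps power_Suc)
qed

lemma qf_eq_imp_eq: "(\<And>v. qf A v = qf B v) \<Longrightarrow> A = B"
  by (simp add: vec_eq_iff polarization[of A] polarization[of B])

lemma qf_adj: "qf (adj A) v = cnj (qf A v)"
  by (simp add: qf_cinner cinner_adj[symmetric] cinner_commute[of v])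

definition herm :: "complex^'n^'n \<Rightarrow> bool" where "herm A \<longleftrightarrow> adj A = A"

lemma herm_iff_qf_real: "herm A \<longleftrightarrow> (\<forall>v. Im (qf A v) = 0)"
proof
  assume "herm A"
  hence "qf A v = cnj (qf A v)" for v using qf_adj[of A v] by (simp add: herm_def)
  thus "\<forall>v. Im (qf A v) = 0" by (metis Reals_cnj_iff complex_is_Real_iff)
next
  assume "\<forall>v. Im (qf A v) = 0"
  hence "qf (adj A) v = qf A v" for v by (simp add: qf_adj complex_eq_iff)
  thus "herm A" unfolding herm_def by (rule qf_eq_imp_eq)
qed

lemma psd_herm: "psd A \<Longrightarrow> herm A"
  by (simp add: psd_def herm_iff_qf_real)

lemma herm_qf_real: "herm A \<Longrightarrow> qf A v = complex_of_real (Re (qf A v))"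
  by (simp add: herm_iff_qf_real complex_eq_iff)

lemma herm_cinner_swap: "herm A \<Longrightarrow> cinner x (A *v y) = cnj (cinner y (A *v x))"
  by (metis cinner_adj cinner_commute herm_def)

lemma herm_zero: "herm A \<Longrightarrow> (\<And>v. Re (qf A v) = 0) \<Longrightarrow> A = 0"
proof (rule qf_eq_imp_eq)
  fix v assume h: "herm A" and z: "\<And>v. Re (qf A v) = 0"
  have "qf A v = 0" by (metis h z herm_qf_real of_real_0)
  moreover have "qf 0 v = 0" by (simp add: qf_def matrix_vector_mult_def)
  ultimately show "qf A v = qf 0 v" by simp
qed

lemma psd_null:
  assumes "psd A" "Re (qf A x) = 0"
  shows "A *v x = 0"
proof -
  have h: "herm A" using assms psd_herm by auto
  have key: "Re (cinner y (A *v x)) = 0" for y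
  proof -
    define a where "a = Re (cinner y (A *v x))"
    define b where "b = Re (qf A y)"
    have b0: "b \<ge> 0" using assms(1) by (simp add: psd_def b_def)
    have "Re (qf A (x + complex_of_real s *s y)) = 2 * s * a + s^2 * b" for s
    proof -
      have "cinner x (A *v y) = cnj (cinner y (A *v x))" using herm_cinner_swap[OF h] .
      thus ?thesis using assms(2) by (simp add: qf_add_scale a_def b_def power2_eq_square)
    qed
    moreover have "Re (qf A (x + complex_of_real s *s y)) \<ge> 0" for s
      using assms(1) psd_def by blast
    ultimately have ineq: "2 * s * a + s^2 * b \<ge> 0" for s by metis
    define s where "s = -a/(b+1)"
    have "(b+1)^2 * (2 * s * a + s^2 * b) = - (a^2 * (b+2))"
    proof -
      have e: "s*(b+1) = -a" using b0 s_def by simp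
      have "(b+1)^2 * (2 * s * a + s^2 * b) = 2*a*(s*(b+1))*(b+1) + (s*(b+1))^2*b"
        by (simp add: algebra_simps power2_eq_square)
      also have "\<dots> = - (a^2 * (b+2))" unfolding e by (simp add: algebra_simps power2_eq_square)
      finally show ?thesis .
    qed
    moreover have "(b+1)^2 * (2 * s * a + s^2 * b) \<ge> 0" using ineq[of s] by simp
    ultimately have "a^2 * (b+2) \<le> 0" by linarith
    hence "a^2 \<le> 0" using b0 by (simp add: mult_le_0_iff)
    thus ?thesis unfolding a_def by simp
  qed
  show ?thesis using key[of "A *v x"] cinner_self_eq0 by blast
qed


definition csub :: "(complex^'n) set \<Rightarrow> bool" where
  "csub V \<longleftrightarrow> (\<forall>x\<in>V. \<forall>y\<in>V. x + y \<in> V) \<and> (\<forall>c. \<forall>x\<in>V. c *s x \<in> V) \<and> V \<noteq> {}"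

lemma scaleR_vec_cscale: "c *\<^sub>R (x::complex^'n) = complex_of_real c *s x"
unfolding vec_eq_iff
proof
  fix i show "(c *\<^sub>R x) $ i = (complex_of_real c *s x) $ i"
    by (simp only: vector_scaleR_component vector_smult_component) (simp add: scaleR_conv_of_real)
qed

lemma csub_zero: "csub V \<Longrightarrow> 0 \<in> V"
  unfolding csub_def by (metis all_not_in_conv vector_smult_lzero)

lemma csub_subspace: "csub V \<Longrightarrow> subspace V"
  unfolding subspace_def using csub_zero[of V]
  by (auto simp: csub_def scaleR_vec_cscale)

lemma csub_span: "csub V \<Longrightarrow> span V = V"
  using csub_subspace span_eq_iff by blast

lemma decomp_exists:
  assumes "csub V"
  shows "\<exists>y. y \<in> V \<and> (\<forall>w\<in>V. cinner w (x - y) = 0)"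
proof -
  obtain y z where y: "y \<in> span V" and z: "\<And>w. w \<in> span V \<Longrightarrow> orthogonal z w" and xyz: "x = y + z"
    using orthogonal_subspace_decomp_exists by blast
  have "cinner w (x - y) = 0" if w: "w \<in> V" for w
  proof -
    have zx: "z = x - y" using xyz by simp
    have "Re (cinner z w) = 0"
      using z[of w] w csub_span[OF assms] by (simp add: orthogonal_def inner_cinner)
    hence "Re (cinner w z) = 0" by (simp add: cinner_commute[of w z])
    moreover have "\<i> *s w \<in> V" using w assms by (simp add: csub_def)
    hence "Re (cinner z (\<i> *s w)) = 0"
      using z[of "\<i> *s w"] csub_span[OF assms] by (simp add: orthogonal_def inner_cinner)
    hence "Re (cinner (\<i> *s w) z) = 0" by (simp add: cinner_commute[of "\<i> *s w" z])
    hence "Im (cinner w z) = 0" by (simp add: cinner_scale_left)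
    ultimately show ?thesis using zx by (simp add: complex_eq_iff)
  qed
  thus ?thesis using y csub_span[OF assms] by blast
qed

definition pr :: "(complex^'n) set \<Rightarrow> complex^'n \<Rightarrow> complex^'n" where
  "pr V x = (SOME y. y \<in> V \<and> (\<forall>w\<in>V. cinner w (x - y) = 0))"

lemma pr_props:
  assumes "csub V"
  shows "pr V x \<in> V" "\<And>w. w \<in> V \<Longrightarrow> cinner w (x - pr V x) = 0"
  using someI_ex[OF decomp_exists[OF assms, of x]] unfolding pr_def by auto

lemma pr_unique:
  assumes "csub V" "y \<in> V" "\<And>w. w \<in> V \<Longrightarrow> cinner w (x - y) = 0"
  shows "pr V x = y"
proof -
  define d where "d = y - pr V x"
  have dV: "d \<in> V"
  proof -
    have "\<forall>c. \<forall>x\<in>V. c *s x \<in> V" using assms(1) by (simp add: csub_def)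
    moreover have "\<forall>x\<in>V. \<forall>y\<in>V. x + y \<in> V" using assms(1) by (simp add: csub_def)
    ultimately have "y + (-1) *s pr V x \<in> V" using pr_props(1)[OF assms(1)] assms(2) by blast
    moreover have "y + (-1) *s pr V x = d" by (simp add: d_def vec_eq_iff)
    ultimately show ?thesis by simp
  qed
  have "cinner d d = cinner d (x - pr V x) - cinner d (x - y)"
    by (simp add: d_def cinner_diff_right)
  also have "\<dots> = 0" using pr_props(2)[OF assms(1) dV] assms(3)[OF dV] by simp
  finally have "d = 0" using cinner_self_eq0 by (metis zero_complex.simps(1))
  thus ?thesis by (simp add: d_def)
qed

lemma pr_in: "csub V \<Longrightarrow> v \<in> V \<Longrightarrow> pr V v = v"
  by (rule pr_unique) auto

lemma pr_linear:
  assumes "csub V"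
  shows "pr V (c *s x + y) = c *s pr V x + pr V y"
proof (rule pr_unique[OF assms])
  show "c *s pr V x + pr V y \<in> V" using pr_props(1)[OF assms] assms by (simp add: csub_def)
  fix w assume w: "w \<in> V"
  have e: "c *s x + y - (c *s pr V x + pr V y) = c *s (x - pr V x) + (y - pr V y)"
    by (simp add: vec_eq_iff algebra_simps)
  show "cinner w (c *s x + y - (c *s pr V x + pr V y)) = 0"
    unfolding e using pr_props(2)[OF assms w] by (simp only: cinner_add_right cinner_scale_right) simp
qed

lemma pr_add: "csub V \<Longrightarrow> pr V (x + y) = pr V x + pr V y"
  using pr_linear[of V 1 x y] by simp
lemma pr_scale: "csub V \<Longrightarrow> pr V (c *s x) = c *s pr V x"
proof -
  assume V: "csub V"
  have "pr V 0 = 0" using pr_in[OF V csub_zero[OF V]] .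
  thus ?thesis using pr_linear[OF V, of c x 0] by simp
qed

lemma pr_sum:
  assumes V: "csub V" and S: "finite S"
  shows "pr V (\<Sum>j\<in>S. f j) = (\<Sum>j\<in>S. pr V (f j))"
  using S
proof (induction S rule: finite_induct)
  case empty thus ?case using pr_in[OF V csub_zero[OF V]] by simp
next
  case (insert a S) thus ?case by (simp add: pr_add[OF V])
qed

definition prmat :: "(complex^'n) set \<Rightarrow> complex^'n^'n" where
  "prmat V = (\<chi> i j. pr V (axis j 1) $ i)"

lemma prmat_mv: assumes "csub V" shows "prmat V *v x = pr V x"
proof -
  have "pr V x = pr V (\<Sum>j\<in>UNIV. x$j *s axis j 1)" by (simp add: basis_expansion)
  also have "\<dots> = (\<Sum>j\<in>UNIV. x$j *s pr V (axis j 1))"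
    by (simp add: pr_sum[OF assms] pr_scale[OF assms])
  also have "\<dots> = prmat V *v x"
    by (simp add: vec_eq_iff prmat_def matrix_vector_mult_def sum_component mult.commute)
  finally show ?thesis by simp
qed

lemma prmat_orth:
  assumes "csub V"
  shows "orth_proj (prmat V) V"
proof -
  let ?P = "prmat V"
  have pp: "?P ** ?P = ?P"
    by (rule matrix_eq_mv) (simp add: matrix_vector_mul_assoc[symmetric] prmat_mv[OF assms]
        pr_in[OF assms pr_props(1)[OF assms]])
  have sym: "cinner x (pr V y) = cinner (pr V x) (pr V y)" for x y
  proof -
    have "cinner x (pr V y) = cinner (pr V x + (x - pr V x)) (pr V y)" by simp
    also have "\<dots> = cinner (pr V x) (pr V y) + cnj (cinner (pr V y) (x - pr V x))"
      by (simp only: cinner_add_left cinner_commute[of "x - pr V x"])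
    also have "\<dots> = cinner (pr V x) (pr V y)" using pr_props[OF assms] by simp
    finally show ?thesis .
  qed
  have adj: "adj ?P = ?P"
  proof (rule matrix_eq_mv, rule vec_eq_cinner)
    fix x y
    have "cinner (adj ?P *v x) y = cinner x (pr V y)" by (simp add: cinner_adj[symmetric] prmat_mv[OF assms])
    also have "\<dots> = cinner (pr V x) (pr V y)" by (rule sym)
    also have "\<dots> = cinner (pr V x) y"
      using sym[of y x] by (metis cinner_commute)
    finally show "cinner (adj ?P *v x) y = cinner (?P *v x) y" by (simp add: prmat_mv[OF assms])
  qed
  have rng: "mat_range ?P = V"
    unfolding mat_range_def prmat_mv[OF assms]
    using pr_props(1)[OF assms] pr_in[OF assms] by (auto simp: image_iff) (metis)
  show ?thesis using pp adj rng by (simp add: orth_proj_def)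
qed

lemma mat_range_csub: "csub (mat_range (L::complex^'n^'n))"
  unfolding csub_def mat_range_def
  by (auto simp: image_iff mv_add[symmetric] mv_scale[symmetric]) 


lemma lin_int_zero:
  fixes M :: "'i \<Rightarrow> 'a::topological_space measure" and a :: "'i \<Rightarrow> real"
  assumes I: "finite I" and fm: "\<And>l. l\<in>I \<Longrightarrow> finite_measure (M l)"
    and st: "\<And>l. l\<in>I \<Longrightarrow> sets (M l) = sets borel"
    and eq: "\<And>A. A \<in> sets borel \<Longrightarrow> (\<Sum>l\<in>I. a l * measure (M l) A) = 0"
    and f: "f \<in> borel_measurable borel" and bnd: "\<And>x. \<bar>f x\<bar> \<le> B"
  shows "(\<Sum>l\<in>I. a l * integral\<^sup>L (M l) f) = 0"
proof -
  have meas: "g \<in> borel_measurable (M l)" if "g \<in> borel_measurable borel" "l \<in> I" for g :: "'a \<Rightarrow> real" and l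
    unfolding measurable_cong_sets[OF st[OF that(2)] refl] by (rule that(1))
  have spc: "space (M l) = UNIV" if "l \<in> I" for l
    using sets_eq_imp_space_eq[OF st[OF that]] by simp
  have intg: "integrable (M l) g" if "g \<in> borel_measurable borel" "\<And>x. \<bar>g x\<bar> \<le> C" "l \<in> I" for g :: "'a \<Rightarrow> real" and C l
  proof (rule finite_measure.integrable_const_bound[OF fm[OF that(3)]])
    show "AE x in M l. norm (g x) \<le> C" using that(2) by simp
    show "g \<in> borel_measurable (M l)" using meas[OF that(1) that(3)] .
  qed
  have nonneg: "\<forall>C. (\<forall>x. u x \<le> C) \<longrightarrow> (\<Sum>l\<in>I. a l * integral\<^sup>L (M l) u) = 0"
    if um: "u \<in> borel_measurable borel" and un: "\<And>x. 0 \<le> u x" for u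
    using um un
  proof (induction rule: borel_measurable_induct_real)
    case (set A)
    have "integral\<^sup>L (M l) (indicator A) = measure (M l) A" if "l \<in> I" for l
      using spc[OF that] by simp
    hence "(\<Sum>l\<in>I. a l * integral\<^sup>L (M l) (indicator A)) = (\<Sum>l\<in>I. a l * measure (M l) A)"
      by (intro sum.cong) auto
    thus ?case using eq[OF set] by simp
  next
    case (mult u c)
    show ?case
    proof (intro allI impI)
      fix C assume C: "\<forall>x. c * u x \<le> C"
      show "(\<Sum>l\<in>I. a l * integral\<^sup>L (M l) (\<lambda>x. c * u x)) = 0"
      proof (cases "c = 0")
        case True thus ?thesis by simp
      next
        case False
        hence cp: "c > 0" using mult by simp
        have "\<forall>x. u x \<le> C / c" using C cp by (simp add: field_simps mult.commute)
        hence "(\<Sum>l\<in>I. a l * integral\<^sup>L (M l) u) = 0" using mult by blast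
        hence "c * (\<Sum>l\<in>I. a l * integral\<^sup>L (M l) u) = 0" by simp
        thus ?thesis by (simp add: sum_distrib_left mult.left_commute)
      qed
    qed
  next
    case (add u v)
    show ?case
    proof (intro allI impI)
      fix C assume C: "\<forall>x. v x + u x \<le> C"
      have u0: "0 \<le> u x" and v0: "0 \<le> v x" for x using add.hyps by auto
      have uC: "\<forall>x. u x \<le> C"
      proof
        fix x show "u x \<le> C" using C v0[of x] by (smt (verit))
      qed
      have vC: "\<forall>x. v x \<le> C"
      proof
        fix x show "v x \<le> C" using C u0[of x] by (smt (verit))
      qed
      have ub: "\<bar>u x\<bar> \<le> C" and vb: "\<bar>v x\<bar> \<le> C" for x
        using uC vC u0[of x] v0[of x] by auto
      have "integral\<^sup>L (M l) (\<lambda>x. v x + u x) = integral\<^sup>L (M l) v + integral\<^sup>L (M l) u" if "l \<in> I" for l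
      proof (rule Bochner_Integration.integral_add)
        show "integrable (M l) v" using intg[of v C l] add.hyps vb that by blast
        show "integrable (M l) u" using intg[of u C l] add.hyps ub that by blast
      qed
      hence "(\<Sum>l\<in>I. a l * integral\<^sup>L (M l) (\<lambda>x. v x + u x)) =
          (\<Sum>l\<in>I. a l * integral\<^sup>L (M l) v) + (\<Sum>l\<in>I. a l * integral\<^sup>L (M l) u)"
        by (simp add: distrib_left sum.distrib)
      thus "(\<Sum>l\<in>I. a l * integral\<^sup>L (M l) (\<lambda>x. v x + u x)) = 0" using add uC vC by simp
    qed
  next
    case (seq U)
    have incU: "incseq U" using seq(3) .
    have limU: "\<And>x. (\<lambda>i. U i x) \<longlonglongrightarrow> u x" using seq(4) by simp
    have U0: "\<And>i x. 0 \<le> U i x" using seq(2) .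
    have Um: "\<And>i. U i \<in> borel_measurable borel" using seq(1) .
    have PU: "\<And>i. \<forall>C. (\<forall>x. U i x \<le> C) \<longrightarrow> (\<Sum>l\<in>I. a l * integral\<^sup>L (M l) (U i)) = 0"
      using seq(5) .
    show ?case
    proof (intro allI impI)
      fix C assume C: "\<forall>x. u x \<le> C"
      have Ule: "U i x \<le> u x" for i x
      proof -
        have "incseq (\<lambda>i. U i x)" using incU by (simp add: incseq_def le_fun_def)
        thus ?thesis using incseq_le[OF _ limU[of x]] by simp
      qed
      have UC: "\<forall>x. U i x \<le> C" for i using Ule C order_trans by blast
      have lim: "(\<lambda>i. integral\<^sup>L (M l) (U i)) \<longlonglongrightarrow> integral\<^sup>L (M l) u" if l: "l \<in> I" for l
      proof -
        have a1: "u \<in> borel_measurable (M l)" using meas[OF um l] .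
        have a2: "\<And>i. U i \<in> borel_measurable (M l)" using meas Um l by blast
        have a3: "integrable (M l) (\<lambda>x. C)"
          using finite_measure.integrable_const[OF fm[OF l]] by blast
        have a4: "AE x in M l. (\<lambda>i. U i x) \<longlonglongrightarrow> u x" using limU by simp
        have a5: "\<And>i. AE x in M l. norm (U i x) \<le> C" using UC U0 by simp
        show ?thesis by (rule integral_dominated_convergence[OF a1 a2 a3 a4 a5])
      qed
      have "(\<lambda>i. \<Sum>l\<in>I. a l * integral\<^sup>L (M l) (U i)) \<longlonglongrightarrow> (\<Sum>l\<in>I. a l * integral\<^sup>L (M l) u)"
        by (intro tendsto_sum tendsto_mult_left lim)
      moreover have "(\<lambda>i. \<Sum>l\<in>I. a l * integral\<^sup>L (M l) (U i)) = (\<lambda>i. 0)"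
      proof (rule ext)
        fix i show "(\<Sum>l\<in>I. a l * integral\<^sup>L (M l) (U i)) = 0" using PU[of i] UC[of i] by blast
      qed
      ultimately show "(\<Sum>l\<in>I. a l * integral\<^sup>L (M l) u) = 0"
        by (simp add: LIMSEQ_const_iff)
    qed
  qed
  define fp where "fp x = max 0 (f x)" for x
  define fn where "fn x = max 0 (- f x)" for x
  have fpm: "fp \<in> borel_measurable borel" "fn \<in> borel_measurable borel"
    using f unfolding fp_def fn_def by auto
  have B0: "0 \<le> B" using bnd[of undefined] by linarith
  have fpb: "\<forall>x. fp x \<le> B" "\<forall>x. fn x \<le> B" using bnd B0
    unfolding fp_def fn_def by (auto simp: abs_le_iff)
  have "(\<Sum>l\<in>I. a l * integral\<^sup>L (M l) fp) = 0" using nonneg[of fp] fpm fpb by (auto simp: fp_def)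
  moreover have "(\<Sum>l\<in>I. a l * integral\<^sup>L (M l) fn) = 0" using nonneg[of fn] fpm fpb by (auto simp: fn_def)
  moreover have "integral\<^sup>L (M l) f = integral\<^sup>L (M l) fp - integral\<^sup>L (M l) fn" if l: "l \<in> I" for l
  proof -
    have "f = (\<lambda>x. fp x - fn x)" by (auto simp: fp_def fn_def fun_eq_iff)
    hence "integral\<^sup>L (M l) f = integral\<^sup>L (M l) (\<lambda>x. fp x - fn x)" by simp
    also have "\<dots> = integral\<^sup>L (M l) fp - integral\<^sup>L (M l) fn"
    proof (rule Bochner_Integration.integral_diff)
      show "integrable (M l) fp" using intg[of fp B l] fpm fpb l by (auto simp: fp_def abs_le_iff)
      show "integrable (M l) fn" using intg[of fn B l] fpm fpb l by (auto simp: fn_def abs_le_iff)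
    qed
    finally show ?thesis .
  qed
  ultimately show ?thesis
    by (simp add: right_diff_distrib sum_subtractf)
qed

lemma lin_int:
  fixes M :: "'i \<Rightarrow> 'a::topological_space measure" and a :: "'i \<Rightarrow> real"
  assumes I: "finite I" and fm: "\<And>l. l\<in>I \<Longrightarrow> finite_measure (M l)"
    and st: "\<And>l. l\<in>I \<Longrightarrow> sets (M l) = sets borel"
    and fm0: "finite_measure Mz" and st0: "sets Mz = sets borel"
    and eq: "\<And>A. A \<in> sets borel \<Longrightarrow> measure Mz A = (\<Sum>l\<in>I. a l * measure (M l) A)"
    and f: "f \<in> borel_measurable borel" and bnd: "\<And>x. \<bar>f x\<bar> \<le> B"
  shows "integral\<^sup>L Mz f = (\<Sum>l\<in>I. a l * integral\<^sup>L (M l) f)"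
proof -
  let ?I = "insert None (Some ` I)"
  let ?M = "\<lambda>x. case x of None \<Rightarrow> Mz | Some l \<Rightarrow> M l"
  let ?a = "\<lambda>x. case x of None \<Rightarrow> -1 | Some l \<Rightarrow> a l"
  have s: "(\<Sum>x\<in>?I. g x) = g None + (\<Sum>l\<in>I. g (Some l))" for g :: "'i option \<Rightarrow> real"
    using I by (simp add: sum.reindex)
  have "(\<Sum>x\<in>?I. ?a x * integral\<^sup>L (?M x) f) = 0"
  proof (rule lin_int_zero[where B=B])
    show "finite ?I" using I by simp
    show "finite_measure (?M x)" if "x \<in> ?I" for x using that fm fm0 by auto
    show "sets (?M x) = sets borel" if "x \<in> ?I" for x using that st st0 by auto
    show "(\<Sum>x\<in>?I. ?a x * measure (?M x) A) = 0" if "A \<in> sets borel" for A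
      unfolding s using eq[OF that] by simp
  qed fact+
  thus ?thesis unfolding s by simp
qed


definition pmm :: "('a::topological_space set \<Rightarrow> complex^'d^'d) \<Rightarrow> bool" where
  "pmm \<nu> \<longleftrightarrow> mat_measure \<nu> \<and> (\<forall>\<Delta>\<in>sets borel. psd (\<nu> \<Delta>))"

lemma qf_expand: "qf X w = (\<Sum>i\<in>UNIV. \<Sum>j\<in>UNIV. cnj (w$i) * X$i$j * w$j)"
  by (simp add: qf_def matrix_vector_mult_def sum_distrib_left mult.assoc)

lemma qf_zero[simp]: "qf 0 w = 0"
  by (simp add: qf_expand)

lemma mm_sums:
  fixes \<nu> :: "'a::topological_space set \<Rightarrow> complex^'d^'d"
  assumes "mat_measure \<nu>" "range A \<subseteq> sets borel" "disjoint_family A"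
  shows "(\<lambda>k. \<nu> (A k) $ i $ j) sums (\<nu> (\<Union>k. A k) $ i $ j)"
proof -
  have "\<forall>A. range A \<subseteq> sets borel \<longrightarrow> disjoint_family A \<longrightarrow>
        (\<forall>i j. (\<lambda>k. \<nu> (A k) $ i $ j) sums (\<nu> (\<Union>k. A k) $ i $ j))"
    using assms(1) by (simp add: mat_measure_def)
  thus ?thesis using assms(2,3) by simp
qed

lemma mm_empty:
  fixes \<nu> :: "'a::topological_space set \<Rightarrow> complex^'d^'d"
  assumes "mat_measure \<nu>" shows "\<nu> {} = 0"
proof -
  have "(\<lambda>k. \<nu> ((\<lambda>k::nat. {}::'a set) k) $ i $ j) sums (\<nu> (\<Union>k. (\<lambda>k::nat. {}::'a set) k) $ i $ j)" for i j
    by (rule mm_sums[OF assms]) (auto simp: disjoint_family_on_def)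
  hence "summable (\<lambda>k. \<nu> {} $ i $ j)" for i j using sums_summable by force
  thus ?thesis by (simp add: vec_eq_iff summable_const_iff)
qed

lemma qf_sums:
  assumes "mat_measure \<nu>" "range A \<subseteq> sets borel" "disjoint_family A"
  shows "(\<lambda>k. qf (\<nu> (A k)) w) sums qf (\<nu> (\<Union>k. A k)) w"
proof -
  have e: "(\<lambda>k. \<nu> (A k) $ i $ j) sums (\<nu> (\<Union>k. A k) $ i $ j)" for i j
    using mm_sums[OF assms] .
  show ?thesis unfolding qf_expand
    by (rule sums_sum, rule sums_sum, rule sums_mult2, rule sums_mult, rule e)
qed

lemma borel_sigma: "sigma_algebra UNIV (sets (borel::'a::topological_space measure))"
  using sets.sigma_algebra_axioms[of borel] by simp

lemma sets_qmeas[simp]: "sets (qmeas \<nu> w) = sets borel"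
  unfolding qmeas_def by (rule sigma_algebra.sets_measure_of_eq[OF borel_sigma])

lemma space_qmeas[simp]: "space (qmeas \<nu> w) = UNIV"
  using sets_eq_imp_space_eq[OF sets_qmeas[of \<nu> w]] by simp

lemma emeasure_qmeas:
  assumes p: "pmm \<nu>" and D: "\<Delta> \<in> sets borel"
  shows "emeasure (qmeas \<nu> w) \<Delta> = ennreal (Re (qf (\<nu> \<Delta>) w))"
  unfolding qmeas_def
proof (rule emeasure_measure_of_sigma[OF borel_sigma _ _ D])
  have mm: "mat_measure \<nu>" using p by (simp add: pmm_def)
  show "positive (sets borel) (\<lambda>\<Delta>. ennreal (Re (qf (\<nu> \<Delta>) w)))"
    unfolding positive_def using mm_empty[OF mm] by simp
  show "countably_additive (sets borel) (\<lambda>\<Delta>. ennreal (Re (qf (\<nu> \<Delta>) w)))"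
    unfolding countably_additive_def
  proof (intro allI impI)
    fix A :: "nat \<Rightarrow> 'a set" assume A: "range A \<subseteq> sets borel" "disjoint_family A"
    have s: "(\<lambda>k. Re (qf (\<nu> (A k)) w)) sums Re (qf (\<nu> (\<Union>k. A k)) w)"
      using sums_Re[OF qf_sums[OF mm A]] .
    have nn: "0 \<le> Re (qf (\<nu> (A k)) w)" for k
      using p A(1) unfolding pmm_def psd_def by blast
    show "(\<Sum>i. ennreal (Re (qf (\<nu> (A i)) w))) = ennreal (Re (qf (\<nu> (\<Union> (range A))) w))"
      using suminf_ennreal2[OF nn sums_summable[OF s]] sums_unique[OF s] by simp
  qed
qed

lemma measure_qmeas:
  assumes p: "pmm \<nu>" and D: "\<Delta> \<in> sets borel"
  shows "measure (qmeas \<nu> w) \<Delta> = Re (qf (\<nu> \<Delta>) w)"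
proof -
  have "0 \<le> Re (qf (\<nu> \<Delta>) w)" using p D unfolding pmm_def psd_def by blast
  thus ?thesis unfolding measure_def emeasure_qmeas[OF p D] by simp
qed

lemma finite_qmeas: assumes "pmm \<nu>" shows "finite_measure (qmeas \<nu> w)"
  by (rule finite_measureI) (simp add: emeasure_qmeas[OF assms])

lemma re_qf_poly:
  fixes g :: "'d::finite \<Rightarrow> 'd \<Rightarrow> nat \<Rightarrow> real"
  shows "Re (qf ((\<chi> i j. (1/4) * (\<Sum>k<(4::nat). \<i> ^ k * complex_of_real (g i j k))) :: complex^'d^'d) w)
       = (\<Sum>i\<in>UNIV. \<Sum>j\<in>UNIV. \<Sum>k<(4::nat). Re (cnj (w$i) * w$j * \<i> ^ k) / 4 * g i j k)"
proof -
  have e: "Re (cnj (w$i) * ((1/4) * (\<Sum>k<(4::nat). \<i> ^ k * complex_of_real (g i j k))) * w$j)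
      = (\<Sum>k<(4::nat). Re (cnj (w$i) * w$j * \<i> ^ k) / 4 * g i j k)" for i j
  proof -
    have "cnj (w$i) * ((1/4) * (\<Sum>k<(4::nat). \<i> ^ k * complex_of_real (g i j k))) * w$j
       = (\<Sum>k<(4::nat). (cnj (w$i) * w$j * \<i> ^ k / 4) * complex_of_real (g i j k))"
      by (simp add: sum_distrib_left sum_distrib_right algebra_simps)
    also have "Re \<dots> = (\<Sum>k<(4::nat). Re (cnj (w$i) * w$j * \<i> ^ k) / 4 * g i j k)"
      by (simp add: Re_sum)
    finally show ?thesis .
  qed
  show ?thesis by (simp only: qf_expand Re_sum vec_lambda_beta e)
qed

lemma triple_sum: "(\<Sum>i\<in>A. \<Sum>j\<in>B. \<Sum>k\<in>C. h i j k) = (\<Sum>(i,j,k)\<in>A\<times>B\<times>C. h i j k)"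
  by (simp add: sum.cartesian_product)

lemma mat_integral_qf:
  fixes \<nu> :: "'a::topological_space set \<Rightarrow> complex^'d^'d"
  assumes p: "pmm \<nu>" and f: "f \<in> borel_measurable borel" and bnd: "\<And>x. \<bar>f x\<bar> \<le> B"
  shows "Re (qf (mat_integral \<nu> f) w) = integral\<^sup>L (qmeas \<nu> w) f"
proof -
  define u where "u i j k = axis j 1 + (\<i> ^ k) *s axis i (1::complex)" for i j :: 'd and k :: nat
  define c where "c i j k = Re (cnj (w$i) * w$j * \<i> ^ k) / 4" for i j :: 'd and k :: nat
  have mid: "measure (qmeas \<nu> w) A = (\<Sum>(i,j,k)\<in>UNIV\<times>UNIV\<times>{..<4}. c i j k * measure (qmeas \<nu> (u i j k)) A)"
    if A: "A \<in> sets borel" for A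
  proof -
    have h: "herm (\<nu> A)" using p A by (simp add: pmm_def psd_herm)
    have "\<nu> A = (\<chi> i j. (1/4) * (\<Sum>k<(4::nat). \<i> ^ k * complex_of_real (Re (qf (\<nu> A) (u i j k)))))"
      unfolding vec_eq_iff u_def
      by (simp add: polarization[of "\<nu> A"] herm_qf_real[OF h, symmetric])
    hence "Re (qf (\<nu> A) w) = (\<Sum>i\<in>UNIV. \<Sum>j\<in>UNIV. \<Sum>k<(4::nat). c i j k * Re (qf (\<nu> A) (u i j k)))"
      using re_qf_poly[of "\<lambda>i j k. Re (qf (\<nu> A) (u i j k))" w] unfolding c_def by metis
    thus ?thesis using measure_qmeas[OF p A] by (simp add: triple_sum)
  qed
  have "integral\<^sup>L (qmeas \<nu> w) f = (\<Sum>(i,j,k)\<in>UNIV\<times>UNIV\<times>{..<4}. c i j k * integral\<^sup>L (qmeas \<nu> (u i j k)) f)"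
    using lin_int[where I="UNIV\<times>UNIV\<times>{..<4}" and M="\<lambda>(i,j,k). qmeas \<nu> (u i j k)"
        and a="\<lambda>(i,j,k). c i j k" and Mz="qmeas \<nu> w" and f=f and B=B]
    using finite_qmeas[OF p] f bnd mid by (simp add: case_prod_beta split_def)
  also have "\<dots> = Re (qf (mat_integral \<nu> f) w)"
    unfolding mat_integral_def re_qf_poly triple_sum[symmetric] c_def u_def by simp
  finally show ?thesis by simp
qed

lemma mi_zero:
  assumes "\<And>w. integral\<^sup>L (qmeas \<nu> w) f = 0"
  shows "mat_integral \<nu> f = 0"
  unfolding mat_integral_def vec_eq_iff using assms by simp

lemma qf_scale: "qf X (c *s v) = cnj c * c * qf X v"
  by (simp add: qf_cinner mv_scale cinner_scale_left cinner_scale_right mult.assoc)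

lemma qmeas_unit: "cnj c * c = 1 \<Longrightarrow> qmeas \<nu> (c *s v) = qmeas \<nu> v"
  unfolding qmeas_def by (simp add: qf_scale)

lemma herm_mat_integral:
  fixes \<nu> :: "'a::topological_space set \<Rightarrow> complex^'d^'d"
  shows "herm (mat_integral \<nu> f)"
proof -
  define F where "F v = integral\<^sup>L (qmeas \<nu> v) f" for v :: "complex^'d"
  have key: "F (axis i 1 + c *s axis j 1) = F (axis j 1 + d *s axis i 1)"
    if "cnj c * c = 1" "c * d = 1" for c d i j
  proof -
    have "c *s (axis j 1 + d *s axis i (1::complex)) = axis i 1 + c *s axis j 1"
    proof -
      have "c * (x + d * y) = y + c * x" for x y :: complex
        by (simp add: distrib_left mult.assoc[symmetric] that(2))
      thus ?thesis using that(2) by (simp add: vec_eq_iff)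
    qed
    hence "F (axis i 1 + c *s axis j 1) = F (c *s (axis j 1 + d *s axis i 1))" by (simp only:)
    also have "\<dots> = F (axis j 1 + d *s axis i 1)" unfolding F_def qmeas_unit[OF that(1)] ..
    finally show ?thesis .
  qed
  have k1: "F (axis i 1 + \<i> *s axis j 1) = F (axis j 1 + (-\<i>) *s axis i 1)" for i j
    by (rule key) auto
  have k2: "F (axis i 1 + (-1) *s axis j 1) = F (axis j 1 + (-1) *s axis i 1)" for i j
    by (rule key) auto
  have k3: "F (axis i 1 + (-\<i>) *s axis j 1) = F (axis j 1 + \<i> *s axis i 1)" for i j
    by (rule key) auto
  have k0: "F (axis i 1 + 1 *s axis j 1) = F (axis j 1 + 1 *s axis i 1)" for i j
    by (rule key) auto
  show ?thesis
    unfolding herm_def adj_def vec_eq_iff mat_integral_def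
    apply (simp add: numeral_eq_Suc lessThan_Suc)
    apply (simp only: F_def[symmetric])
    using k0 k1 k2 k3 by (simp add: complex_eq_iff)
qed


lemma qf_add_mat: "qf (A + B) v = qf A v + qf B v"
  by (simp add: qf_expand distrib_left distrib_right sum.distrib)
lemma qf_diff_mat: "qf (A - B) v = qf A v - qf B v"
  by (simp add: qf_expand left_diff_distrib right_diff_distrib sum_subtractf)
lemma qf_scaleR_mat: "qf (r *\<^sub>R A) v = complex_of_real r * qf A v"
proof -
  have e: "(r *\<^sub>R A)$i$j = complex_of_real r * A$i$j" for i j
    by (simp only: vector_scaleR_component) (simp add: scaleR_conv_of_real)
  show ?thesis unfolding qf_expand e by (simp only: sum_distrib_left mult_ac)
qed
lemma qf_cscale: "qf (cscale c A) v = c * qf A v"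
  by (simp add: qf_expand cscale_def sum_distrib_left mult.assoc mult.left_commute)
lemma qf_sum_mat: "finite S \<Longrightarrow> qf (\<Sum>k\<in>S. A k) v = (\<Sum>k\<in>S. qf (A k) v)"
  by (induction S rule: finite_induct) (auto simp: qf_add_mat)
lemma qf_mat1: "qf (mat 1) v = cinner v v"
  by (simp add: qf_cinner)

lemma herm_add: "herm A \<Longrightarrow> herm B \<Longrightarrow> herm (A + B)"
  by (simp add: herm_iff_qf_real qf_add_mat)
lemma herm_diff: "herm A \<Longrightarrow> herm B \<Longrightarrow> herm (A - B)"
  by (simp add: herm_iff_qf_real qf_diff_mat)
lemma herm_scaleR: "herm A \<Longrightarrow> herm (r *\<^sub>R A)"
  by (simp add: herm_iff_qf_real qf_scaleR_mat)
lemma herm_cscale: "herm A \<Longrightarrow> herm (cscale (complex_of_real r) A)"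
  by (simp add: herm_iff_qf_real qf_cscale)
lemma herm_zero_mat: "herm 0"
  by (simp add: herm_iff_qf_real)
lemma herm_sum: "finite S \<Longrightarrow> (\<And>k. k \<in> S \<Longrightarrow> herm (A k)) \<Longrightarrow> herm (\<Sum>k\<in>S. A k)"
  by (induction S rule: finite_induct) (auto simp: herm_add herm_zero_mat)

lemma herm_eqI: "herm A \<Longrightarrow> herm B \<Longrightarrow> (\<And>v. Re (qf A v) = Re (qf B v)) \<Longrightarrow> A = B"
  using herm_zero[of "A - B"] herm_diff[of A B] by (simp add: qf_diff_mat)

lemma adj_adj: "adj (adj A) = A"
  by (simp add: adj_def vec_eq_iff)

lemma adj_mult: "adj (A ** B) = adj B ** (adj A :: complex^'m^'n)"
proof (rule matrix_eq_mv, rule vec_eq_cinner)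
  fix x y
  have "cinner (adj (A ** B) *v x) y = cinner x ((A ** B) *v y)" by (simp add: cinner_adj)
  also have "\<dots> = cinner x (A *v (B *v y))" by (simp add: matrix_vector_mul_assoc)
  also have "\<dots> = cinner (adj B *v (adj A *v x)) y" by (simp add: cinner_adj)
  finally show "cinner (adj (A ** B) *v x) y = cinner ((adj B ** adj A) *v x) y"
    by (simp add: matrix_vector_mul_assoc)
qed

lemma qf_PAP: "adj P = P \<Longrightarrow> qf (P ** A ** P) w = qf A (P *v w)"
  by (simp add: qf_cinner matrix_vector_mul_assoc[symmetric] cinner_adj)

definition PL :: "complex^'n^'n \<Rightarrow> complex^'n^'n" where
  "PL L = prmat (mat_range L)"

lemma PL_orth: "orth_proj (PL L) (mat_range L)"
  unfolding PL_def by (rule prmat_orth[OF mat_range_csub])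

lemma PL_idem: "PL L ** PL L = PL L" and PL_adj: "adj (PL L) = PL L"
  using PL_orth[of L] by (auto simp: orth_proj_def)

lemma PL_mv: "PL L *v x = pr (mat_range L) x"
  unfolding PL_def by (rule prmat_mv[OF mat_range_csub])

lemma PL_L: "PL L ** L = L"
proof (rule matrix_eq_mv)
  fix x
  have "L *v x \<in> mat_range L" by (simp add: mat_range_def)
  thus "(PL L ** L) *v x = L *v x"
    by (simp add: matrix_vector_mul_assoc[symmetric] PL_mv pr_in[OF mat_range_csub])
qed

lemma herm_null_orth:
  assumes h: "herm L"
  shows "L *v (x - PL L *v x) = 0"
proof -
  let ?z = "x - PL L *v x"
  have "cinner (L *v y) ?z = 0" for y
    unfolding PL_mv using pr_props(2)[OF mat_range_csub, of "L *v y" L x]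
    by (simp add: mat_range_def)
  hence c: "cinner y (L *v ?z) = 0" for y using cinner_adj[of y L ?z] h by (simp add: herm_def)
  show ?thesis by (rule cinner_self_eq0) (simp add: c)
qed

lemma L_PL: assumes "herm L" shows "L ** PL L = L"
proof (rule matrix_eq_mv)
  fix x
  have "L *v (x - PL L *v x) = 0" using herm_null_orth[OF assms] .
  thus "(L ** PL L) *v x = L *v x"
    by (simp add: matrix_vector_mul_assoc[symmetric] mv_diff)
qed

lemma dominated:
  assumes A: "psd A" and L: "psd L" and le: "\<And>v. Re (qf A v) \<le> c * Re (qf L v)"
  shows "A ** PL L = A" "PL L ** A = A"
proof -
  have hL: "herm L" and hA: "herm A" using A L psd_herm by auto
  have "A *v (x - PL L *v x) = 0" for x
  proof (rule psd_null[OF A])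
    have "L *v (x - PL L *v x) = 0" using herm_null_orth[OF hL] .
    hence "Re (qf L (x - PL L *v x)) = 0" by (simp add: qf_cinner)
    hence "Re (qf A (x - PL L *v x)) \<le> 0" using le[of "x - PL L *v x"] by simp
    moreover have "Re (qf A (x - PL L *v x)) \<ge> 0" using A by (simp add: psd_def)
    ultimately show "Re (qf A (x - PL L *v x)) = 0" by simp
  qed
  thus A1: "A ** PL L = A"
    by (intro matrix_eq_mv) (simp add: matrix_vector_mul_assoc[symmetric] mv_diff)
  have "adj (A ** PL L) = PL L ** A" using hA by (simp add: adj_mult PL_adj herm_def)
  thus "PL L ** A = A" using A1 hA by (simp add: herm_def)
qed

lemma lives_onI:
  assumes "T ** PL L = T" "PL L ** T = T"
  shows "lives_on T (mat_range L)"
  unfolding lives_on_def using PL_orth[of L] assms by metis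

lemma herm_lives:
  assumes h: "herm T" and e: "\<And>w. Re (qf T w) = Re (qf T (PL L *v w))"
  shows "T ** PL L = T" "PL L ** T = T"
proof -
  let ?P = "PL L"
  have hP: "herm (?P ** T ** ?P)"
    using h by (simp add: herm_def adj_mult PL_adj matrix_mul_assoc)
  have eq: "?P ** T ** ?P = T"
    by (rule herm_eqI[OF hP h], subst qf_PAP[OF PL_adj], rule e[symmetric])
  have "T ** ?P = (?P ** T ** ?P) ** ?P" using eq by simp
  also have "\<dots> = ?P ** T ** (?P ** ?P)" by (simp only: matrix_mul_assoc)
  also have "\<dots> = T" by (simp only: PL_idem eq)
  finally show "T ** ?P = T" .
  have "?P ** T = ?P ** (?P ** T ** ?P)" using eq by simp
  also have "\<dots> = (?P ** ?P) ** T ** ?P" by (simp only: matrix_mul_assoc)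
  also have "\<dots> = T" by (simp only: PL_idem eq)
  finally show "?P ** T = T" .
qed

lemma qf_1: "qf (X::complex^1^1) v = cnj (v$1) * X$1$1 * v$1"
  by (simp add: qf_expand sum_1)

lemma psd_1_iff: "psd (X::complex^1^1) \<longleftrightarrow> Im (X$1$1) = 0 \<and> Re (X$1$1) \<ge> 0"
proof
  assume "psd X"
  hence "Im (qf X (axis 1 1)) = 0 \<and> Re (qf X (axis 1 1)) \<ge> 0" by (simp add: psd_def)
  thus "Im (X$1$1) = 0 \<and> Re (X$1$1) \<ge> 0" by (simp add: qf_1)
next
  assume a: "Im (X$1$1) = 0 \<and> Re (X$1$1) \<ge> 0"
  have "qf X v = complex_of_real ((cmod (v$1))^2 * Re (X$1$1))" for v
  proof -
    have "X$1$1 = complex_of_real (Re (X$1$1))" using a by (simp add: complex_eq_iff)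
    hence "qf X v = cnj (v$1) * v$1 * complex_of_real (Re (X$1$1))" by (simp add: qf_1 ac_simps)
    thus ?thesis by (simp add: complex_norm_square[symmetric] mult.commute)
  qed
  thus "psd X" using a by (simp add: psd_def)
qed

lemma mat1_eq: "(X::complex^1^1) = Y \<longleftrightarrow> X$1$1 = Y$1$1"
  by (simp add: vec_eq_iff forall_1)


lemma matrix_sub_rdistrib: "(A - B) ** C = A ** C - B ** (C::complex^'n^'n)"
  by (simp add: vec_eq_iff matrix_matrix_mult_def left_diff_distrib sum_subtractf)

lemma sum_mat_entry: "(\<Sum>k\<in>S. A k) $ i $ j = (\<Sum>k\<in>S. A k $ i $ j)"
  by (simp add: sum_component)

lemma cscale_entry: "cscale c A $ i $ j = c * A $ i $ j"
  by (simp add: cscale_def)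

lemma cscale_zero[simp]: "cscale 0 A = 0"
  by (simp add: cscale_def vec_eq_iff)
lemma cscale_one[simp]: "cscale 1 A = A"
  by (simp add: cscale_def vec_eq_iff)

lemma mat1_11[simp]: "(mat 1 :: complex^1^1) $ 1 $ 1 = 1"
  by (simp add: mat_def)

lemma Cset_pmm: "\<nu> \<in> Cset m \<phi> \<Longrightarrow> pmm \<nu>"
  by (simp add: Cset_def pmm_def)

lemma measure_le_zero:
  assumes "finite_measure M" "sets M = sets borel" "A \<subseteq> B" "B \<in> sets borel" "measure M B = 0"
  shows "measure M A = 0"
proof (cases "A \<in> sets borel")
  case True
  have "measure M A \<le> measure M B"
    by (rule finite_measure.finite_measure_mono[OF assms(1) assms(3)]) (use assms in simp)
  thus ?thesis using assms(5) by (simp add: measure_nonneg antisym)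
next
  case False thus ?thesis using assms(2) by (simp add: measure_notin_sets)
qed

lemma measure_inter_full:
  assumes fm: "finite_measure M" and st: "sets M = sets borel" and A: "A \<in> sets borel" and B: "B \<in> sets borel"
    and z: "measure M (UNIV - B) = 0"
  shows "measure M (A \<inter> B) = measure M A"
proof -
  have "measure M (A - B) = 0"
    by (rule measure_le_zero[OF fm st _ _ z]) (use B in auto)
  moreover have "measure M A = measure M (A \<inter> B) + measure M (A - B)"
  proof -
    have "A = (A \<inter> B) \<union> (A - B)" by auto
    hence "measure M A = measure M ((A \<inter> B) \<union> (A - B))" by simp
    also have "\<dots> = measure M (A \<inter> B) + measure M (A - B)"
      by (rule finite_measure.finite_measure_Union[OF fm]) (use A B st in auto)
    finally show ?thesis .
  qed
  ultimately show ?thesis by simp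
qed

lemma null_cover:
  assumes fm: "finite_measure M" and st: "sets M = sets borel" and K: "compact K"
    and loc: "\<And>x. x \<in> K \<Longrightarrow> \<exists>U. open U \<and> x \<in> U \<and> measure M U = 0"
  shows "\<exists>U. open U \<and> K \<subseteq> U \<and> measure M U = 0"
proof -
  let ?T = "{U. open U \<and> measure M U = 0}"
  have "K \<subseteq> \<Union>?T" using loc by blast
  then obtain T' where T': "T' \<subseteq> ?T" "finite T'" "K \<subseteq> \<Union>T'"
    using compactE[OF K, of ?T] by blast
  have op: "open (\<Union>T')" using T' by auto
  have "measure M (\<Union>T') \<le> (\<Sum>S\<in>T'. measure M S)"
    by (rule measure_Union_le) (use T' st in auto)
  also have "\<dots> = 0" using T' by (intro sum.neutral) auto
  finally have "measure M (\<Union>T') = 0" by (simp add: measure_nonneg antisym)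
  thus ?thesis using op T' by blast
qed

lemma supp_closed: "closed (supp \<nu>)"
proof -
  have "- supp \<nu> = \<Union>{U. open U \<and> \<nu> U = 0}" by (auto simp: supp_def)
  thus ?thesis unfolding closed_def by auto
qed

locale S =
  fixes \<phi> :: "nat \<Rightarrow> 'a::t2_space \<Rightarrow> real"
    and \<mu>s :: "nat \<Rightarrow> 'a set \<Rightarrow> complex^1^1"
    and L :: "nat \<Rightarrow> complex^'N^'N"
    and \<mu> :: "'a set \<Rightarrow> complex^'N^'N"
    and m n :: nat
  assumes cpt: "compact (UNIV :: 'a set)"
    and cont: "\<forall>r<m. continuous_on UNIV (\<phi> r)"
    and ext: "\<forall>k<n. extreme_pt (Cset m \<phi>) (\<mu>s k)"
    and disj: "\<forall>k<n. \<forall>l<n. k \<noteq> l \<longrightarrow> supp (\<mu>s k) \<inter> supp (\<mu>s l) = {}"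
    and Lpsd: "\<forall>k<n. psd (L k)"
    and Lsum: "(\<Sum>k<n. L k) = mat 1"
    and wi: "weakly_independent n (\<lambda>k. mat_range (L k))"
    and mudef: "\<mu> = (\<lambda>\<Delta>. \<Sum>k<n. cscale (\<mu>s k \<Delta> $ 1 $ 1) (L k))"
begin

lemma phi_meas: "r < m \<Longrightarrow> \<phi> r \<in> borel_measurable borel"
  using cont by (simp add: borel_measurable_continuous_onI)

lemma phi_bnd: assumes "r < m" obtains B where "\<And>x. \<bar>\<phi> r x\<bar> \<le> B"
proof -
  have "compact (\<phi> r ` UNIV)" using compact_continuous_image cont cpt assms by blast
  hence "bounded (\<phi> r ` UNIV)" by (rule compact_imp_bounded)
  then obtain B where "\<forall>x\<in>\<phi> r ` UNIV. norm x \<le> B" unfolding bounded_iff by blast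
  thus ?thesis using that by auto
qed

lemma mus_C: "k < n \<Longrightarrow> \<mu>s k \<in> Cset m \<phi>"
  using ext by (simp add: extreme_pt_def)

lemma mus_pmm: "k < n \<Longrightarrow> pmm (\<mu>s k)"
  using mus_C Cset_pmm by blast

definition M :: "nat \<Rightarrow> 'a measure" where "M k = qmeas (\<mu>s k) (axis 1 1)"
definition mm :: "nat \<Rightarrow> 'a set \<Rightarrow> real" where "mm k \<Delta> = measure (M k) \<Delta>"

lemma M_fin: "k < n \<Longrightarrow> finite_measure (M k)"
  unfolding M_def by (rule finite_qmeas[OF mus_pmm])
lemma M_sets[simp]: "sets (M k) = sets borel"
  unfolding M_def by simp

lemma mm_eq: assumes "k < n" "\<Delta> \<in> sets borel" shows "mm k \<Delta> = Re (\<mu>s k \<Delta> $ 1 $ 1)"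
  unfolding mm_def M_def measure_qmeas[OF mus_pmm[OF assms(1)] assms(2)] by (simp add: qf_1)

lemma mm_nonborel: "\<Delta> \<notin> sets borel \<Longrightarrow> mm k \<Delta> = 0"
  unfolding mm_def by (simp add: measure_notin_sets)

lemma mus_nonborel: "k < n \<Longrightarrow> \<Delta> \<notin> sets borel \<Longrightarrow> \<mu>s k \<Delta> = 0"
  using mus_C by (simp add: Cset_def mat_measure_def)

lemma mus_entry: assumes "k < n" shows "\<mu>s k \<Delta> $ 1 $ 1 = complex_of_real (mm k \<Delta>)"
proof (cases "\<Delta> \<in> sets borel")
  case True
  have "psd (\<mu>s k \<Delta>)" using mus_pmm[OF assms] True by (simp add: pmm_def)
  thus ?thesis using mm_eq[OF assms True] by (simp add: psd_1_iff complex_eq_iff)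
next
  case False thus ?thesis using mus_nonborel[OF assms False] mm_nonborel[OF False] by simp
qed

lemma mm_nonneg: "0 \<le> mm k \<Delta>"
  unfolding mm_def by (rule measure_nonneg)

lemma mus_UNIV: "k < n \<Longrightarrow> mm k UNIV = 1"
  using mus_C[of k] mus_entry[of k UNIV] by (simp add: Cset_def mat_def)

lemma M_int: assumes "k < n" "r < m" shows "integral\<^sup>L (M k) (\<phi> r) = 0"
proof -
  obtain B where B: "\<And>x. \<bar>\<phi> r x\<bar> \<le> B" using phi_bnd[OF assms(2)] by blast
  have "Re (qf (mat_integral (\<mu>s k) (\<phi> r)) (axis 1 1)) = integral\<^sup>L (M k) (\<phi> r)"
    unfolding M_def by (rule mat_integral_qf[OF mus_pmm[OF assms(1)] phi_meas[OF assms(2)] B])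
  moreover have "mat_integral (\<mu>s k) (\<phi> r) = 0" using mus_C[OF assms(1)] assms(2) by (simp add: Cset_def)
  ultimately show ?thesis by simp
qed

lemma Lherm: "k < n \<Longrightarrow> herm (L k)"
  using Lpsd psd_herm by blast

lemma qf_mu: "qf (\<mu> \<Delta>) w = (\<Sum>k<n. complex_of_real (mm k \<Delta> * Re (qf (L k) w)))"
proof -
  have "qf (\<mu> \<Delta>) w = (\<Sum>k<n. \<mu>s k \<Delta> $ 1 $ 1 * qf (L k) w)"
    unfolding mudef by (simp add: qf_sum_mat qf_cscale)
  also have "\<dots> = (\<Sum>k<n. complex_of_real (mm k \<Delta> * Re (qf (L k) w)))"
  proof (rule sum.cong)
    fix k assume "k \<in> {..<n}" hence k: "k < n" by simp
    define q where "q = Re (qf (L k) w)"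
    have e: "qf (L k) w = complex_of_real q" unfolding q_def by (rule herm_qf_real[OF Lherm[OF k]])
    show "\<mu>s k \<Delta> $ 1 $ 1 * qf (L k) w = complex_of_real (mm k \<Delta> * Re (qf (L k) w))"
      unfolding q_def[symmetric] e by (simp add: mus_entry[OF k])
  qed simp
  finally show ?thesis .
qed

lemma Re_qf_mu: "Re (qf (\<mu> \<Delta>) w) = (\<Sum>k<n. mm k \<Delta> * Re (qf (L k) w))"
  by (simp add: qf_mu Re_sum)

lemma L_nonneg: "k < n \<Longrightarrow> 0 \<le> Re (qf (L k) w)"
  using Lpsd by (simp add: psd_def)

lemma mu_C: "\<mu> \<in> Cset m \<phi>"
proof -
  have entry: "\<mu> \<Delta> $ i $ j = (\<Sum>k<n. complex_of_real (mm k \<Delta>) * L k $ i $ j)" for \<Delta> i j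
    unfolding mudef by (simp add: sum_mat_entry cscale_entry mus_entry)
  have mmeas: "mat_measure \<mu>"
    unfolding mat_measure_def
  proof (intro conjI allI impI)
    fix \<Delta> :: "'a set" assume "\<Delta> \<notin> sets borel"
    thus "\<mu> \<Delta> = 0" unfolding mudef by (simp add: mus_nonborel)
  next
    fix A :: "nat \<Rightarrow> 'a set" and i j assume A: "range A \<subseteq> sets borel" "disjoint_family A"
    have s: "(\<lambda>q. \<mu>s k (A q) $ 1 $ 1) sums (\<mu>s k (\<Union>q. A q) $ 1 $ 1)" if "k < n" for k
      by (rule mm_sums[OF _ A]) (use mus_pmm[OF that] in \<open>simp add: pmm_def\<close>)
    have "(\<lambda>q. \<Sum>k<n. \<mu>s k (A q) $ 1 $ 1 * L k $ i $ j) sums (\<Sum>k<n. \<mu>s k (\<Union>q. A q) $ 1 $ 1 * L k $ i $ j)"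
      by (rule sums_sum, rule sums_mult2, rule s) simp
    thus "(\<lambda>q. \<mu> (A q) $ i $ j) sums (\<mu> (\<Union>q. A q) $ i $ j)"
      unfolding mudef by (simp add: sum_mat_entry cscale_entry)
  qed
  have psd: "psd (\<mu> \<Delta>)" for \<Delta>
    unfolding psd_def qf_mu
    by (auto simp: Re_sum Im_sum intro!: sum_nonneg mult_nonneg_nonneg mm_nonneg L_nonneg)
  have one: "\<mu> UNIV = mat 1"
    unfolding mudef using mus_C by (simp add: Cset_def Lsum)
  have "pmm \<mu>" using mmeas psd by (simp add: pmm_def)
  have int: "mat_integral \<mu> (\<phi> r) = 0" if r: "r < m" for r
  proof (rule mi_zero)
    fix w
    obtain B where B: "\<And>x. \<bar>\<phi> r x\<bar> \<le> B" using phi_bnd[OF r] by blast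
    have "integral\<^sup>L (qmeas \<mu> w) (\<phi> r) = (\<Sum>k\<in>{..<n}. Re (qf (L k) w) * integral\<^sup>L (M k) (\<phi> r))"
    proof (rule lin_int[OF _ _ _ _ _ _ phi_meas[OF r] B])
      show "measure (qmeas \<mu> w) A = (\<Sum>k\<in>{..<n}. Re (qf (L k) w) * measure (M k) A)" if "A \<in> sets borel" for A
        using measure_qmeas[OF \<open>pmm \<mu>\<close> that] by (simp add: Re_qf_mu mm_def mult.commute)
    qed (auto simp: M_fin finite_qmeas[OF \<open>pmm \<mu>\<close>])
    also have "\<dots> = 0" using M_int r by simp
    finally show "integral\<^sup>L (qmeas \<mu> w) (\<phi> r) = 0" .
  qed
  show ?thesis using mmeas psd one int by (simp add: Cset_def)
qed


lemma mm_open_zero: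
  assumes "k < n" "open U" "\<mu>s k U = 0" shows "mm k U = 0"
  using mm_eq[OF assms(1)] assms(2,3) by simp

lemma sep:
  assumes k: "k < n" and l: "l < n" and kl: "k \<noteq> l"
  shows "\<exists>E. E \<in> sets borel \<and> mm k (UNIV - E) = 0 \<and> mm l E = 0"
proof -
  let ?K = "supp (\<mu>s l)"
  have cK: "compact ?K" using compact_Int_closed[OF cpt supp_closed, of "\<mu>s l"] by simp
  have dj: "supp (\<mu>s k) \<inter> ?K = {}" using disj k l kl by blast
  have "\<exists>U. open U \<and> ?K \<subseteq> U \<and> measure (M k) U = 0"
  proof (rule null_cover[OF M_fin[OF k] M_sets cK])
    fix x assume "x \<in> ?K"
    hence "x \<notin> supp (\<mu>s k)" using dj by blast
    then obtain U where U: "open U" "x \<in> U" "\<mu>s k U = 0" unfolding supp_def by blast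
    thus "\<exists>U. open U \<and> x \<in> U \<and> measure (M k) U = 0"
      using mm_open_zero[OF k U(1) U(3)] unfolding mm_def by blast
  qed
  then obtain U where U: "open U" "?K \<subseteq> U" "mm k U = 0" unfolding mm_def by blast
  let ?E = "UNIV - U"
  have Eb: "?E \<in> sets borel" using borel_closed[OF closed_Diff[OF closed_UNIV U(1)]] .
  have cE: "compact ?E" using compact_Int_closed[OF cpt, of ?E] U(1) by (simp add: closed_Diff)
  have "\<exists>W. open W \<and> ?E \<subseteq> W \<and> measure (M l) W = 0"
  proof (rule null_cover[OF M_fin[OF l] M_sets cE])
    fix y assume "y \<in> ?E"
    hence "y \<notin> ?K" using U(2) by blast
    then obtain V where V: "open V" "y \<in> V" "\<mu>s l V = 0" unfolding supp_def by blast
    thus "\<exists>V. open V \<and> y \<in> V \<and> measure (M l) V = 0"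
      using mm_open_zero[OF l V(1) V(3)] unfolding mm_def by blast
  qed
  then obtain W where W: "open W" "?E \<subseteq> W" "measure (M l) W = 0" by blast
  have "mm l ?E = 0" unfolding mm_def
    by (rule measure_le_zero[OF M_fin[OF l] M_sets W(2) _ W(3)]) (use W(1) in simp)
  moreover have "UNIV - ?E = U" by auto
  ultimately show ?thesis using Eb U(3) by auto
qed

definition E :: "nat \<Rightarrow> nat \<Rightarrow> 'a set" where
  "E k l = (SOME E. E \<in> sets borel \<and> mm k (UNIV - E) = 0 \<and> mm l E = 0)"

lemma E_props:
  assumes "k < n" "l < n" "k \<noteq> l"
  shows "E k l \<in> sets borel" "mm k (UNIV - E k l) = 0" "mm l (E k l) = 0"
  using someI_ex[OF sep[OF assms]] unfolding E_def by auto

definition Sk :: "nat \<Rightarrow> 'a set" where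
  "Sk k = UNIV - (\<Union>l\<in>{l. l < n \<and> l \<noteq> k}. (UNIV - E k l) \<union> E l k)"

lemma Sk_borel: assumes "k < n" shows "Sk k \<in> sets borel"
proof -
  have "(\<Union>l\<in>{l. l < n \<and> l \<noteq> k}. (UNIV - E k l) \<union> E l k) \<in> sets borel"
    by (rule sets.finite_UN) (use E_props assms in auto)
  thus ?thesis unfolding Sk_def by (metis sets.compl_sets space_borel)
qed

lemma Sk_disj: assumes "k < n" "l < n" "k \<noteq> l" shows "Sk k \<inter> Sk l = {}"
  using assms unfolding Sk_def by blast

lemma Sk_full: assumes k: "k < n" shows "mm k (UNIV - Sk k) = 0"
proof -
  let ?I = "{l. l < n \<and> l \<noteq> k}"
  have eq: "UNIV - Sk k = (\<Union>l\<in>?I. (UNIV - E k l) \<union> E l k)" unfolding Sk_def by auto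
  have "mm k (UNIV - Sk k) \<le> (\<Sum>l\<in>?I. mm k ((UNIV - E k l) \<union> E l k))"
    unfolding eq mm_def by (rule measure_UNION_le) (use E_props k in auto)
  also have "\<dots> \<le> (\<Sum>l\<in>?I. mm k (UNIV - E k l) + mm k (E l k))"
    unfolding mm_def by (rule sum_mono) (rule measure_Un_le, use E_props k in auto)
  also have "\<dots> = 0" using E_props k by (intro sum.neutral) auto
  finally show ?thesis using mm_nonneg[of k] by (simp add: antisym)
qed

lemma Sk_null: assumes "k < n" "l < n" "k \<noteq> l" shows "mm l (Sk k) = 0"
  unfolding mm_def
proof (rule measure_le_zero[OF M_fin[OF assms(2)] M_sets])
  show "Sk k \<subseteq> UNIV - Sk l" using Sk_disj[OF assms] by blast
  show "UNIV - Sk l \<in> sets borel" using Sk_borel[OF assms(2)] by (metis sets.compl_sets space_borel)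
  show "measure (M l) (UNIV - Sk l) = 0" using Sk_full[OF assms(2)] by (simp add: mm_def)
qed

lemma mm_inter_Sk: assumes "k < n" "\<Delta> \<in> sets borel" shows "mm k (\<Delta> \<inter> Sk k) = mm k \<Delta>"
  unfolding mm_def
  by (rule measure_inter_full[OF M_fin[OF assms(1)] M_sets assms(2) Sk_borel[OF assms(1)]])
     (use Sk_full[OF assms(1)] in \<open>simp add: mm_def\<close>)

end

locale S2 = S \<phi> \<mu>s L \<mu> m n for \<phi> :: "nat \<Rightarrow> 'a::t2_space \<Rightarrow> real" and \<mu>s L and \<mu> :: "'a set \<Rightarrow> complex^'N^'N" and m n +
  fixes \<nu>1 \<nu>2 :: "'a set \<Rightarrow> complex^'N^'N" and t :: real
  assumes n1: "\<nu>1 \<in> Cset m \<phi>" and n2: "\<nu>2 \<in> Cset m \<phi>" and t0: "0 < t" and t1: "t < 1"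
    and dec: "\<mu> = (\<lambda>\<Delta>. t *\<^sub>R \<nu>1 \<Delta> + (1 - t) *\<^sub>R \<nu>2 \<Delta>)"
begin

lemma p1: "pmm \<nu>1" using n1 Cset_pmm by blast

lemma le_mu: assumes "\<Delta> \<in> sets borel" shows "t * Re (qf (\<nu>1 \<Delta>) w) \<le> Re (qf (\<mu> \<Delta>) w)"
proof -
  have "0 \<le> Re (qf (\<nu>2 \<Delta>) w)" using n2 assms by (simp add: Cset_def psd_def)
  moreover have "Re (qf (\<mu> \<Delta>) w) = t * Re (qf (\<nu>1 \<Delta>) w) + (1 - t) * Re (qf (\<nu>2 \<Delta>) w)"
    unfolding dec by (simp add: qf_add_mat qf_scaleR_mat)
  ultimately show ?thesis using t1 by simp
qed

definition N :: "nat \<Rightarrow> 'a set \<Rightarrow> complex^'N^'N" where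
  "N k \<Delta> = (if \<Delta> \<in> sets borel then \<nu>1 (\<Delta> \<inter> Sk k) else 0)"

lemma psd_zero: "psd 0" by (simp add: psd_def)

lemma N_psd: assumes "k < n" shows "psd (N k \<Delta>)"
  using p1 Sk_borel[OF assms] by (auto simp: N_def pmm_def psd_zero)

lemma N_pmm: assumes k: "k < n" shows "pmm (N k)"
proof -
  have "mat_measure (N k)"
    unfolding mat_measure_def
  proof (intro conjI allI impI)
    fix \<Delta> :: "'a set" assume "\<Delta> \<notin> sets borel" thus "N k \<Delta> = 0" by (simp add: N_def)
  next
    fix A :: "nat \<Rightarrow> 'a set" and i j assume A: "range A \<subseteq> sets borel" "disjoint_family A"
    have A': "range (\<lambda>q. A q \<inter> Sk k) \<subseteq> sets borel" using A(1) Sk_borel[OF k] by auto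
    have D': "disjoint_family (\<lambda>q. A q \<inter> Sk k)" using A(2) by (auto simp: disjoint_family_on_def)
    have "(\<lambda>q. \<nu>1 (A q \<inter> Sk k) $ i $ j) sums (\<nu>1 (\<Union>q. A q \<inter> Sk k) $ i $ j)"
      by (rule mm_sums[OF _ A' D']) (use p1 in \<open>simp add: pmm_def\<close>)
    moreover have "(\<Union>q. A q \<inter> Sk k) = (\<Union>q. A q) \<inter> Sk k" by auto
    moreover have "(\<Union>q. A q) \<in> sets borel" using A(1) by auto
    ultimately show "(\<lambda>q. N k (A q) $ i $ j) sums (N k (\<Union>q. A q) $ i $ j)"
      using A(1) by (simp add: N_def image_subset_iff)
  qed
  thus ?thesis using N_psd[OF k] by (simp add: pmm_def)
qed

lemma mu_Sk:
  assumes k: "k < n" and D: "\<Delta> \<in> sets borel"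
  shows "Re (qf (\<mu> (\<Delta> \<inter> Sk k)) w) = mm k \<Delta> * Re (qf (L k) w)"
proof -
  have z: "mm l (\<Delta> \<inter> Sk k) = 0" if "l < n" "l \<noteq> k" for l
    unfolding mm_def
    by (rule measure_le_zero[OF M_fin[OF that(1)] M_sets _ Sk_borel[OF k]])
       (use Sk_null[OF k that(1) that(2)[symmetric]] in \<open>auto simp: mm_def\<close>)
  have "Re (qf (\<mu> (\<Delta> \<inter> Sk k)) w) = (\<Sum>l<n. mm l (\<Delta> \<inter> Sk k) * Re (qf (L l) w))"
    by (rule Re_qf_mu)
  also have "\<dots> = mm k (\<Delta> \<inter> Sk k) * Re (qf (L k) w) + (\<Sum>l\<in>{..<n} - {k}. mm l (\<Delta> \<inter> Sk k) * Re (qf (L l) w))"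
    using k by (simp add: sum.remove)
  also have "(\<Sum>l\<in>{..<n} - {k}. mm l (\<Delta> \<inter> Sk k) * Re (qf (L l) w)) = 0"
    using z by (intro sum.neutral) auto
  finally show ?thesis using mm_inter_Sk[OF k D] by simp
qed

lemma N_le: assumes k: "k < n" shows "Re (qf (N k \<Delta>) w) \<le> mm k \<Delta> / t * Re (qf (L k) w)"
proof (cases "\<Delta> \<in> sets borel")
  case True
  have b: "\<Delta> \<inter> Sk k \<in> sets borel" using True Sk_borel[OF k] by auto
  have "t * Re (qf (N k \<Delta>) w) \<le> mm k \<Delta> * Re (qf (L k) w)"
    using le_mu[OF b, of w] mu_Sk[OF k True, of w] True by (simp add: N_def)
  thus ?thesis using t0 by (simp add: field_simps)
next
  case False thus ?thesis by (simp add: N_def mm_nonborel)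
qed

lemma N_live: assumes k: "k < n"
  shows "N k \<Delta> ** PL (L k) = N k \<Delta>" "PL (L k) ** N k \<Delta> = N k \<Delta>"
  using dominated[OF N_psd[OF k] Lpsd[rule_format, OF k] N_le[OF k]] by auto

lemma nu1_split: assumes D: "\<Delta> \<in> sets borel" shows "\<nu>1 \<Delta> = (\<Sum>k<n. N k \<Delta>)"
proof (rule herm_eqI)
  show "herm (\<nu>1 \<Delta>)" using p1 D by (simp add: pmm_def psd_herm)
  show "herm (\<Sum>k<n. N k \<Delta>)" by (rule herm_sum) (simp_all add: N_psd psd_herm)
  fix w
  let ?Q = "qmeas \<nu>1 w"
  have fQ: "finite_measure ?Q" by (rule finite_qmeas[OF p1])
  define R where "R = \<Delta> - (\<Union>k\<in>{..<n}. Sk k)"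
  have Ub: "(\<Union>k\<in>{..<n}. \<Delta> \<inter> Sk k) \<in> sets borel"
    by (rule sets.finite_UN) (use D Sk_borel in auto)
  have Rb: "R \<in> sets borel" unfolding R_def
    by (rule sets.Diff[OF D], rule sets.finite_UN) (use Sk_borel in auto)
  have split: "\<Delta> = R \<union> (\<Union>k\<in>{..<n}. \<Delta> \<inter> Sk k)" unfolding R_def by auto
  have "measure ?Q \<Delta> = measure ?Q R + measure ?Q (\<Union>k\<in>{..<n}. \<Delta> \<inter> Sk k)"
    by (subst split, rule finite_measure.finite_measure_Union[OF fQ]) (use Rb Ub R_def in auto)
  also have "measure ?Q (\<Union>k\<in>{..<n}. \<Delta> \<inter> Sk k) = (\<Sum>k<n. measure ?Q (\<Delta> \<inter> Sk k))"
  proof (rule finite_measure.finite_measure_finite_Union[OF fQ])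
    show "(\<lambda>k. \<Delta> \<inter> Sk k) ` {..<n} \<subseteq> sets ?Q" using D Sk_borel by auto
    show "disjoint_family_on (\<lambda>k. \<Delta> \<inter> Sk k) {..<n}"
      unfolding disjoint_family_on_def using Sk_disj by blast
  qed simp
  also have "measure ?Q R = 0"
  proof -
    have z: "mm l R = 0" if "l < n" for l
      unfolding mm_def
      by (rule measure_le_zero[OF M_fin[OF that] M_sets _ _ Sk_full[OF that, unfolded mm_def]])
         (use Sk_borel[OF that] R_def that in \<open>auto simp: sets.compl_sets\<close>)
    have "Re (qf (\<mu> R) w) = 0" unfolding Re_qf_mu using z by simp
    hence "t * Re (qf (\<nu>1 R) w) \<le> 0" using le_mu[OF Rb, of w] by simp
    moreover have "0 \<le> Re (qf (\<nu>1 R) w)" using p1 Rb by (simp add: pmm_def psd_def)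
    ultimately have "Re (qf (\<nu>1 R) w) = 0" using t0 by (simp add: mult_le_0_iff antisym)
    thus ?thesis using measure_qmeas[OF p1 Rb] by simp
  qed
  finally have "measure ?Q \<Delta> = (\<Sum>k<n. measure ?Q (\<Delta> \<inter> Sk k))" by simp
  moreover have "measure ?Q (\<Delta> \<inter> Sk k) = Re (qf (N k \<Delta>) w)" if "k < n" for k
    using measure_qmeas[OF p1, of "\<Delta> \<inter> Sk k"] D Sk_borel[OF that] by (simp add: N_def)
  ultimately show "Re (qf (\<nu>1 \<Delta>) w) = Re (qf (\<Sum>k<n. N k \<Delta>) w)"
    using measure_qmeas[OF p1 D] by (simp add: qf_sum_mat Re_sum)
qed

lemma matrix_sub_ldistrib: "C ** (A - B) = C ** A - C ** (B::complex^'N^'N)"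
  by (simp add: vec_eq_iff matrix_matrix_mult_def right_diff_distrib sum_subtractf)

lemma N_PNP: assumes k: "k < n" shows "PL (L k) ** N k \<Delta> ** PL (L k) = N k \<Delta>"
  using N_live[OF k] by simp

lemma qmeas_N_P: assumes k: "k < n" shows "qmeas (N k) (PL (L k) *v w) = qmeas (N k) w"
proof -
  have "qf (N k \<Delta>) (PL (L k) *v w) = qf (N k \<Delta>) w" for \<Delta>
    using qf_PAP[OF PL_adj[of "L k"], of "N k \<Delta>" w] N_PNP[OF k, of \<Delta>] by simp
  thus ?thesis unfolding qmeas_def by simp
qed

lemma N_int: assumes r: "r < m" and k: "k < n" shows "integral\<^sup>L (qmeas (N k) w) (\<phi> r) = 0"
proof -
  obtain B where B: "\<And>x. \<bar>\<phi> r x\<bar> \<le> B" using phi_bnd[OF r] by blast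
  define T where "T j = mat_integral (N j) (\<phi> r)" for j
  have Tqf: "Re (qf (T j) v) = integral\<^sup>L (qmeas (N j) v) (\<phi> r)" if "j < n" for j v
    unfolding T_def by (rule mat_integral_qf[OF N_pmm[OF that] phi_meas[OF r] B])
  have live: "T j ** PL (L j) = T j \<and> PL (L j) ** T j = T j" if j: "j < n" for j
  proof -
    have "Re (qf (T j) v) = Re (qf (T j) (PL (L j) *v v))" for v
      unfolding Tqf[OF j] qmeas_N_P[OF j] ..
    thus ?thesis using herm_lives[of "T j" "L j"] herm_mat_integral unfolding T_def by blast
  qed
  have sum0: "(\<Sum>j<n. T j) = 0"
  proof (rule herm_eqI)
    show "herm (\<Sum>j<n. T j)" by (rule herm_sum) (simp_all add: T_def herm_mat_integral)
    show "herm (0::complex^'N^'N)" by (rule herm_zero_mat)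
    fix v
    have "Re (qf (\<Sum>j<n. T j) v) = (\<Sum>j\<in>{..<n}. 1 * integral\<^sup>L (qmeas (N j) v) (\<phi> r))"
      by (simp add: qf_sum_mat Re_sum Tqf)
    also have "\<dots> = integral\<^sup>L (qmeas \<nu>1 v) (\<phi> r)"
    proof (rule lin_int[symmetric, OF _ _ _ _ _ _ phi_meas[OF r] B])
      show "measure (qmeas \<nu>1 v) A = (\<Sum>j\<in>{..<n}. 1 * measure (qmeas (N j) v) A)" if A: "A \<in> sets borel" for A
        using measure_qmeas[OF p1 A] measure_qmeas[OF N_pmm A] nu1_split[OF A]
        by (simp add: qf_sum_mat Re_sum)
    qed (auto simp: finite_qmeas[OF p1] finite_qmeas[OF N_pmm])
    also have "\<dots> = Re (qf (mat_integral \<nu>1 (\<phi> r)) v)"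
      by (rule mat_integral_qf[OF p1 phi_meas[OF r] B, symmetric])
    also have "\<dots> = 0" using n1 r by (simp add: Cset_def)
    finally show "Re (qf (\<Sum>j<n. T j) v) = Re (qf 0 v)" by simp
  qed
  have "\<forall>j<n. T j = 0"
    using wi live sum0 lives_onI unfolding weakly_independent_def by blast
  hence "T k = 0" using k by blast
  thus ?thesis using Tqf[OF k, of w] by simp
qed

lemma N_UNIV: assumes k: "k < n" shows "N k UNIV = L k"
proof -
  define T where "T j = N j UNIV - L j" for j
  have live: "T j ** PL (L j) = T j \<and> PL (L j) ** T j = T j" if j: "j < n" for j
    unfolding T_def matrix_sub_rdistrib matrix_sub_ldistrib
    using N_live[OF j] L_PL[OF Lherm[OF j]] PL_L[of "L j"] by simp
  have sum0: "(\<Sum>j<n. T j) = 0"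
  proof -
    have "(\<Sum>j<n. T j) = (\<Sum>j<n. N j UNIV) - (\<Sum>j<n. L j)" unfolding T_def by (simp add: sum_subtractf)
    also have "(\<Sum>j<n. N j UNIV) = \<nu>1 UNIV" using nu1_split[of UNIV] by simp
    finally show ?thesis using n1 Lsum by (simp add: Cset_def)
  qed
  have "\<forall>j<n. T j = 0"
    using wi live sum0 lives_onI unfolding weakly_independent_def by blast
  thus ?thesis using k by (simp add: T_def)
qed

lemma Re_cnj_real: "Re (cnj z * complex_of_real x * z) = (cmod z)^2 * x"
  by (simp add: cmod_power2) (simp add: algebra_simps power2_eq_square)

lemma N_nonborel: "\<Delta> \<notin> sets borel \<Longrightarrow> N k \<Delta> = 0"
  by (simp add: N_def)

lemma N_eq:
  assumes k: "k < n" and D: "\<Delta> \<in> sets borel"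
  shows "Re (qf (N k \<Delta>) w) = mm k \<Delta> * Re (qf (L k) w)"
proof -
  define a where "a = Re (qf (L k) w)"
  define \<rho> where "\<rho> X = Re (qf (N k X) w)" for X
  have a0: "0 \<le> a" unfolding a_def using L_nonneg[OF k] .
  have \<rho>0: "0 \<le> \<rho> X" for X using N_psd[OF k, of X] by (simp add: \<rho>_def psd_def)
  have \<rho>le: "\<rho> X \<le> mm k X / t * a" for X unfolding \<rho>_def a_def by (rule N_le[OF k])
  have \<rho>U: "\<rho> UNIV = a" unfolding \<rho>_def a_def N_UNIV[OF k] ..
  show ?thesis
  proof (cases "a = 0")
    case True
    have "\<rho> \<Delta> = 0" using \<rho>le[of \<Delta>] \<rho>0[of \<Delta>] True by simp
    thus ?thesis using True by (simp add: \<rho>_def a_def)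
  next
    case False
    hence ap: "a > 0" using a0 by simp
    define \<epsilon> where "\<epsilon> = t / a"
    have ep: "\<epsilon> > 0" using ap t0 by (simp add: \<epsilon>_def)
    have ea: "\<epsilon> * a = t" using ap by (simp add: \<epsilon>_def)
    define val where "val s X = mm k X + s * \<epsilon> * (\<rho> X - a * mm k X)" for s :: real and X
    define \<sigma> where "\<sigma> s X = ((\<chi> i j. complex_of_real (val s X)) :: complex^1^1)" for s X
    have \<sigma>11: "\<sigma> s X $ i $ j = complex_of_real (val s X)" for s X i j by (simp add: \<sigma>_def)
    have val_nb: "val s X = 0" if "X \<notin> sets borel" for s X
      using that by (simp add: val_def \<rho>_def mm_nonborel N_nonborel)
    have val_nn: "0 \<le> val s X" if s: "s = 1 \<or> s = -1" for s X
    proof -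
      have m0: "0 \<le> mm k X" by (rule mm_nonneg)
      have e1: "\<epsilon> * \<rho> X \<le> mm k X"
      proof -
        have "\<epsilon> * \<rho> X \<le> \<epsilon> * (mm k X / t * a)" by (rule mult_left_mono[OF \<rho>le]) (use ep in simp)
        also have "\<dots> = mm k X * (\<epsilon> * a) / t" by simp
        also have "\<dots> = mm k X" using ea t0 by simp
        finally show ?thesis .
      qed
      have e2: "0 \<le> \<epsilon> * \<rho> X" using ep \<rho>0[of X] by simp
      have "val s X = mm k X + s * (\<epsilon> * \<rho> X) - s * (\<epsilon> * a) * mm k X"
        by (simp add: val_def algebra_simps)
      hence "val s X = mm k X + s * (\<epsilon> * \<rho> X) - s * t * mm k X" using ea by simp
      moreover have "t * mm k X \<le> mm k X" using mult_right_mono[of t 1 "mm k X"] t1 m0 by simp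
      moreover have "0 \<le> t * mm k X" using t0 m0 by simp
      ultimately show ?thesis using s e1 e2 by auto
    qed
    have \<sigma>C: "\<sigma> s \<in> Cset m \<phi>" if s: "s = 1 \<or> s = -1" for s
    proof -
      have mmeas: "mat_measure (\<sigma> s)"
        unfolding mat_measure_def
      proof (intro conjI allI impI)
        fix X :: "'a set" assume "X \<notin> sets borel"
        thus "\<sigma> s X = 0" by (simp add: \<sigma>_def val_nb vec_eq_iff)
      next
        fix A :: "nat \<Rightarrow> 'a set" and i j assume A: "range A \<subseteq> sets borel" "disjoint_family A"
        have Ab: "A q \<in> sets borel" for q using A(1) by auto
        have Ub: "(\<Union>q. A q) \<in> sets borel" using A(1) by auto
        have sm: "(\<lambda>q. mm k (A q)) sums mm k (\<Union>q. A q)"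
        proof -
          have "(\<lambda>q. \<mu>s k (A q) $ 1 $ 1) sums (\<mu>s k (\<Union>q. A q) $ 1 $ 1)"
            by (rule mm_sums[OF _ A]) (use mus_pmm[OF k] in \<open>simp add: pmm_def\<close>)
          from sums_Re[OF this] show ?thesis using mm_eq[OF k Ab] mm_eq[OF k Ub] by simp
        qed
        have sr: "(\<lambda>q. \<rho> (A q)) sums \<rho> (\<Union>q. A q)"
          unfolding \<rho>_def
          by (rule sums_Re[OF qf_sums[OF _ A]]) (use N_pmm[OF k] in \<open>simp add: pmm_def\<close>)
        have "(\<lambda>q. val s (A q)) sums val s (\<Union>q. A q)"
          unfolding val_def
          by (rule sums_add[OF sm sums_mult[OF sums_diff[OF sr sums_mult[OF sm]]]])
        from sums_of_real[OF this]
        show "(\<lambda>q. \<sigma> s (A q) $ i $ j) sums (\<sigma> s (\<Union>q. A q) $ i $ j)"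
          by (simp add: \<sigma>11)
      qed
      have psd: "psd (\<sigma> s X)" for X
        using val_nn[OF s, of X] by (simp add: psd_1_iff \<sigma>11)
      have one: "\<sigma> s UNIV = mat 1"
      proof -
        have "val s UNIV = 1" using mus_UNIV[OF k] \<rho>U by (simp add: val_def)
        thus ?thesis by (simp add: mat1_eq \<sigma>11)
      qed
      have pm: "pmm (\<sigma> s)" using mmeas psd by (simp add: pmm_def)
      have int: "mat_integral (\<sigma> s) (\<phi> r) = 0" if r: "r < m" for r
      proof (rule mi_zero)
        fix v :: "complex^1"
        obtain B where B: "\<And>x. \<bar>\<phi> r x\<bar> \<le> B" using phi_bnd[OF r] by blast
        define c1 where "c1 = (cmod (v$1))^2 * (1 - s * \<epsilon> * a)"
        define c2 where "c2 = (cmod (v$1))^2 * (s * \<epsilon>)"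
        define MM where "MM i = (if i = (0::nat) then M k else qmeas (N k) w)" for i
        define aa where "aa i = (if i = (0::nat) then c1 else c2)" for i
        have "integral\<^sup>L (qmeas (\<sigma> s) v) (\<phi> r) = (\<Sum>i\<in>{0,1}. aa i * integral\<^sup>L (MM i) (\<phi> r))"
        proof (rule lin_int[OF _ _ _ _ _ _ phi_meas[OF r] B])
          show "finite_measure (MM i)" if "i \<in> {0,1}" for i
            using that M_fin[OF k] finite_qmeas[OF N_pmm[OF k]] by (auto simp: MM_def)
          show "sets (MM i) = sets borel" if "i \<in> {0,1}" for i by (simp add: MM_def)
          show "finite_measure (qmeas (\<sigma> s) v)" by (rule finite_qmeas[OF pm])
          show "measure (qmeas (\<sigma> s) v) X = (\<Sum>i\<in>{0,1}. aa i * measure (MM i) X)" if X: "X \<in> sets borel" for X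
          proof -
            have "measure (qmeas (\<sigma> s) v) X = (cmod (v$1))^2 * val s X"
              using measure_qmeas[OF pm X, of v] by (simp only: qf_1 \<sigma>11 Re_cnj_real)
            moreover have "measure (MM 0) X = mm k X" by (simp add: MM_def mm_def)
            moreover have "measure (MM 1) X = \<rho> X"
              using measure_qmeas[OF N_pmm[OF k] X] by (simp add: MM_def \<rho>_def)
            ultimately show ?thesis
              by (simp add: aa_def c1_def c2_def val_def algebra_simps)
          qed
        qed auto
        also have "\<dots> = 0"
          using M_int[OF k r] N_int[OF r k] by (simp add: MM_def)
        finally show "integral\<^sup>L (qmeas (\<sigma> s) v) (\<phi> r) = 0" .
      qed
      show ?thesis using mmeas psd one int by (simp add: Cset_def)
    qed
    have avg: "\<mu>s k = (\<lambda>X. (1/2) *\<^sub>R \<sigma> 1 X + (1 - 1/2) *\<^sub>R \<sigma> (-1) X)"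
    proof
      fix X
      have "val 1 X + val (-1) X = 2 * mm k X" by (simp add: val_def)
      have "((1/2) *\<^sub>R \<sigma> 1 X + (1 - 1/2) *\<^sub>R \<sigma> (-1) X) $ 1 $ 1
          = (1/2) *\<^sub>R (\<sigma> 1 X $ 1 $ 1) + (1 - 1/2) *\<^sub>R (\<sigma> (-1) X $ 1 $ 1)"
        by (simp only: vector_add_component vector_scaleR_component)
      also have "\<dots> = complex_of_real ((1/2) * val 1 X + (1/2) * val (-1) X)"
        by (simp add: \<sigma>11 scaleR_conv_of_real)
      also have "(1/2) * val 1 X + (1/2) * val (-1) X = mm k X"
        using \<open>val 1 X + val (-1) X = 2 * mm k X\<close> by simp
      finally have "((1/2) *\<^sub>R \<sigma> 1 X + (1 - 1/2) *\<^sub>R \<sigma> (-1) X) $ 1 $ 1 = complex_of_real (mm k X)" .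
      thus "\<mu>s k X = (1/2) *\<^sub>R \<sigma> 1 X + (1 - 1/2) *\<^sub>R \<sigma> (-1) X"
        by (simp add: mat1_eq mus_entry[OF k])
    qed
    have EE: "\<forall>\<nu>1\<in>Cset m \<phi>. \<forall>\<nu>2\<in>Cset m \<phi>. \<forall>t::real. 0 < t \<and> t < 1 \<and>
        \<mu>s k = (\<lambda>\<Delta>. t *\<^sub>R \<nu>1 \<Delta> + (1 - t) *\<^sub>R \<nu>2 \<Delta>) \<longrightarrow> \<nu>1 = \<mu>s k \<and> \<nu>2 = \<mu>s k"
      using ext k unfolding extreme_pt_def by blast
    have h: "0 < (1/2::real) \<and> (1/2::real) < 1 \<and> \<mu>s k = (\<lambda>X. (1/2) *\<^sub>R \<sigma> 1 X + (1 - 1/2) *\<^sub>R \<sigma> (-1) X)"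
      using avg by simp
    have "\<sigma> 1 = \<mu>s k"
      using mp[OF spec[OF bspec[OF bspec[OF EE \<sigma>C[of 1]] \<sigma>C[of "-1"]], of "1/2"] h] by simp
    hence "\<sigma> 1 \<Delta> $ 1 $ 1 = \<mu>s k \<Delta> $ 1 $ 1" by simp
    hence "val 1 \<Delta> = mm k \<Delta>" by (simp add: \<sigma>11 mus_entry[OF k])
    hence "\<epsilon> * (\<rho> \<Delta> - a * mm k \<Delta>) = 0" by (simp add: val_def)
    hence "\<rho> \<Delta> = a * mm k \<Delta>" using ep by simp
    thus ?thesis by (simp add: \<rho>_def a_def mult.commute)
  qed
qed

lemma nu1_eq_mu: "\<nu>1 = \<mu>"
proof
  fix \<Delta>
  show "\<nu>1 \<Delta> = \<mu> \<Delta>"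
  proof (cases "\<Delta> \<in> sets borel")
    case D: True
    have "N k \<Delta> = cscale (\<mu>s k \<Delta> $ 1 $ 1) (L k)" if k: "k < n" for k
    proof (rule herm_eqI)
      show "herm (N k \<Delta>)" using N_psd[OF k] psd_herm by blast
      show "herm (cscale (\<mu>s k \<Delta> $ 1 $ 1) (L k))"
        unfolding mus_entry[OF k] by (rule herm_cscale[OF Lherm[OF k]])
      fix w
      show "Re (qf (N k \<Delta>) w) = Re (qf (cscale (\<mu>s k \<Delta> $ 1 $ 1) (L k)) w)"
        unfolding N_eq[OF k D] qf_cscale mus_entry[OF k] by simp
    qed
    thus ?thesis unfolding nu1_split[OF D] mudef by simp
  next
    case False
    have "\<nu>1 \<Delta> = 0" using n1 False by (simp add: Cset_def mat_measure_def)
    moreover have "\<mu> \<Delta> = 0" using mu_C False by (simp add: Cset_def mat_measure_def)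
    ultimately show ?thesis by simp
  qed
qed

end

theorem theorem3p12:
  fixes \<phi> :: "nat \<Rightarrow> 'a::t2_space \<Rightarrow> real"
    and \<mu>s :: "nat \<Rightarrow> 'a set \<Rightarrow> complex^1^1"
    and L :: "nat \<Rightarrow> complex^'N^'N"
    and \<mu> :: "'a set \<Rightarrow> complex^'N^'N"
    and m n :: nat
  assumes "compact (UNIV :: 'a set)"
    and "\<forall>r<m. continuous_on UNIV (\<phi> r)"
    and "\<forall>k<n. extreme_pt (Cset m \<phi>) (\<mu>s k)"
    and "\<forall>k<n. \<forall>l<n. k \<noteq> l \<longrightarrow> supp (\<mu>s k) \<inter> supp (\<mu>s l) = {}"
    and "\<forall>k<n. psd (L k)"
    and "(\<Sum>k<n. L k) = mat 1"
    and "weakly_independent n (\<lambda>k. mat_range (L k))"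
    and "\<mu> = (\<lambda>\<Delta>. \<Sum>k<n. cscale (\<mu>s k \<Delta> $ 1 $ 1) (L k))"
  shows "extreme_pt (Cset m \<phi>) \<mu>"
proof -
  interpret S \<phi> \<mu>s L \<mu> m n by (rule S.intro[OF assms])
  show ?thesis unfolding extreme_pt_def
  proof (rule conjI[OF mu_C], intro ballI allI impI)
    fix \<nu>1 \<nu>2 t
    assume c1: "\<nu>1 \<in> Cset m \<phi>" and c2: "\<nu>2 \<in> Cset m \<phi>"
      and h: "0 < t \<and> t < 1 \<and> \<mu> = (\<lambda>\<Delta>. t *\<^sub>R \<nu>1 \<Delta> + (1 - t) *\<^sub>R \<nu>2 \<Delta>)"
    interpret A: S2 \<phi> \<mu>s L \<mu> m n \<nu>1 \<nu>2 t
      by (rule S2.intro[OF S_axioms], rule S2_axioms.intro) (use c1 c2 h in auto)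
    have h2: "\<mu> = (\<lambda>\<Delta>. (1 - t) *\<^sub>R \<nu>2 \<Delta> + (1 - (1 - t)) *\<^sub>R \<nu>1 \<Delta>)"
      using h by (simp add: add.commute)
    interpret B: S2 \<phi> \<mu>s L \<mu> m n \<nu>2 \<nu>1 "1 - t"
      by (rule S2.intro[OF S_axioms], rule S2_axioms.intro[OF c2 c1 _ _ h2]) (use h in auto)
    show "\<nu>1 = \<mu> \<and> \<nu>2 = \<mu>" using A.nu1_eq_mu B.nu1_eq_mu by simp
  qed
qed


end
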